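(* Consider the size process of active clusters of the GFI process with parameters $\beta,\theta,\gamma>0$ and its first moment operators $M_tf(n)=\mathbb{E}_{\delta_n}[\langle X_t,f\rangle]$ for non-negative $f$. Then: (i) for all $p\ge1$, $t\ge0$, $n\ge1$: $M_t([x^p])(n)\le e^{(2^{p-1}p\beta-\theta)t}n^p$, where $[x^p](n)=n^p$; (ii) for every $f\in\mathcal{B}$, with $f_+,f_-$ its positive and negative parts, $M_tf_+(n)$ and $M_tf_-(n)$ are well defined and finite for all $t\ge0,n\ge1$, so one can set $M_tf(n)=\mathbb{E}_{\delta_n}[\langle X_t,f\rangle]:=M_tf_+(n)-M_tf_-(n)$; (iii) $(M_t)_{t\ge0}$ is a positive semigroup on $\mathcal{B}$, and for every $f\in\mathcal{B}$, $t\ge0$, $n\ge1$, $$\frac{d}{dt}M_tf(n)=M_t(\mathcal{L}f)(n),$$ where the linear operator $\mathcal{L}:\mathcal{B}\to\mathcal{B}$ is $$\mathcal{L}f(n)=\beta n(f(n+1)-f(n))-\theta nf(n)+\sum_{j=1}^{n-1}\frac{\gamma n}{j(j+1)}\big(f(j)+f(n-j)-f(n)\big).$$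
   Context: GFI process with parameters $\beta,\theta,\gamma>0$: each active vertex attaches a new active vertex by an open edge at rate $\beta$, each open edge closes at rate $\gamma$, each active vertex is confirmed at rate $\theta$ upon which its whole cluster (maximal set connected by open edges) becomes inactive. $X_t=\sum_{\mathcal{C}\text{ active at }t}\delta_{|\mathcal{C}|}$ and $\langle X_t,f\rangle=\sum_{\mathcal{C}}f(|\mathcal{C}|)$. $\mathbb{E}_{\delta_n}$ is the expectation for the process started from a single active cluster which is a uniform random recursive tree of size $n$ (all edges open). Equivalently, in the size process each active cluster of size $n$ independently: becomes inactive at rate $\theta n$; becomes of size $n+1$ at rate $\beta n$; splits into two clusters of sizes $n-j$ and $j$ at rate $\gamma n/(j(j+1))$, $1\le j\le n-1$. $\mathcal{B}$ is the set of functions $f:\mathbb{N}_+\to\mathbb{R}$ such that $\sup_{n\ge1}|f(n)|/n^p<\infty$ for some $p>0$. *)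

theory Defs
  imports "HOL-Probability.Probability" "HOL-Library.Multiset"
begin

text \<open>A state is a finite
multiset of (positive) cluster sizes.\<close>

definition gfi_rate :: "real \<Rightarrow> real \<Rightarrow> real \<Rightarrow> nat multiset \<Rightarrow> nat multiset \<Rightarrow> real" where
  "gfi_rate \<beta> \<theta> \<gamma> X Y =
     (\<Sum>n\<in>set_mset X. real (count X n) *
        (\<theta> * real n * (if Y = X - {#n#} then 1 else 0)
         + \<beta> * real n * (if Y = X - {#n#} + {#n + 1#} then 1 else 0)
         + (\<Sum>j=1..n-1. \<gamma> * real n / (real j * real (j + 1)) *
              (if Y = X - {#n#} + {#j, n - j#} then 1 else 0))))"

definition gfi_qtot :: "real \<Rightarrow> real \<Rightarrow> real \<Rightarrow> nat multiset \<Rightarrow> real" where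
  "gfi_qtot \<beta> \<theta> \<gamma> X =
     (\<Sum>n\<in>set_mset X. real (count X n) *
        (\<theta> * real n + \<beta> * real n + (\<Sum>j=1..n-1. \<gamma> * real n / (real j * real (j + 1)))))"

text \<open>Iterates of the backward Kolmogorov integral equation: the k-th iterate is the
probability to be in Y at time t having made fewer than k jumps.\<close>
fun gfi_trans_approx ::
  "real \<Rightarrow> real \<Rightarrow> real \<Rightarrow> nat \<Rightarrow> real \<Rightarrow> nat multiset \<Rightarrow> nat multiset \<Rightarrow> ennreal" where
  "gfi_trans_approx \<beta> \<theta> \<gamma> 0 t X Y = 0"
| "gfi_trans_approx \<beta> \<theta> \<gamma> (Suc k) t X Y =
     (if X = Y then ennreal (exp (- gfi_qtot \<beta> \<theta> \<gamma> X * t)) else 0)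
     + (\<integral>\<^sup>+ s\<in>{0..t}. ennreal (exp (- gfi_qtot \<beta> \<theta> \<gamma> X * s)) *
          (\<integral>\<^sup>+ Z. ennreal (gfi_rate \<beta> \<theta> \<gamma> X Z) * gfi_trans_approx \<beta> \<theta> \<gamma> k (t - s) Z Y
             \<partial>count_space UNIV) \<partial>lborel)"

text \<open>Transition function of the (minimal) continuous-time Markov chain.\<close>
definition gfi_trans :: "real \<Rightarrow> real \<Rightarrow> real \<Rightarrow> real \<Rightarrow> nat multiset \<Rightarrow> nat multiset \<Rightarrow> ennreal" where
  "gfi_trans \<beta> \<theta> \<gamma> t X Y = (SUP k. gfi_trans_approx \<beta> \<theta> \<gamma> k t X Y)"

definition pairing :: "nat multiset \<Rightarrow> (nat \<Rightarrow> real) \<Rightarrow> real" where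
  "pairing Y f = sum_mset (image_mset f Y)"

definition gfi_Mplus :: "real \<Rightarrow> real \<Rightarrow> real \<Rightarrow> (nat \<Rightarrow> real) \<Rightarrow> real \<Rightarrow> nat \<Rightarrow> ennreal" where
  "gfi_Mplus \<beta> \<theta> \<gamma> f t n =
     (\<integral>\<^sup>+ Y. gfi_trans \<beta> \<theta> \<gamma> t {#n#} Y * ennreal (pairing Y f) \<partial>count_space UNIV)"

definition pos_part :: "(nat \<Rightarrow> real) \<Rightarrow> nat \<Rightarrow> real" where
  "pos_part f = (\<lambda>m. max (f m) 0)"

definition neg_part :: "(nat \<Rightarrow> real) \<Rightarrow> nat \<Rightarrow> real" where
  "neg_part f = (\<lambda>m. max (- f m) 0)"

definition gfi_M :: "real \<Rightarrow> real \<Rightarrow> real \<Rightarrow> (nat \<Rightarrow> real) \<Rightarrow> real \<Rightarrow> nat \<Rightarrow> real" where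
  "gfi_M \<beta> \<theta> \<gamma> f t n =
     enn2real (gfi_Mplus \<beta> \<theta> \<gamma> (pos_part f) t n) - enn2real (gfi_Mplus \<beta> \<theta> \<gamma> (neg_part f) t n)"

definition classB :: "(nat \<Rightarrow> real) \<Rightarrow> bool" where
  "classB f \<longleftrightarrow> (\<exists>p>0. \<exists>C. \<forall>n\<ge>1. \<bar>f n\<bar> \<le> C * real n powr p)"

definition gfi_L :: "real \<Rightarrow> real \<Rightarrow> real \<Rightarrow> (nat \<Rightarrow> real) \<Rightarrow> nat \<Rightarrow> real" where
  "gfi_L \<beta> \<theta> \<gamma> f n =
     \<beta> * real n * (f (n + 1) - f n) - \<theta> * real n * f n
     + (\<Sum>j=1..n-1. \<gamma> * real n / (real j * real (j + 1)) * (f j + f (n - j) - f n))"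

end

theory Submission
  imports Defs
begin

lemma deriv_within_nonneg_at:
  assumes "(f has_real_derivative D) (at x within {0..})" "0 < x"
  shows "(f has_real_derivative D) (at x)"
proof -
  have "x \<in> interior {0::real..}" using assms(2) by simp
  then have "at x within {0..} = at x" by (rule at_within_interior)
  then show ?thesis using assms(1) by simp
qed

lemma deriv_within_cont_on:
  assumes "\<forall>t\<ge>0. (f has_real_derivative D t) (at t within {0..})"
  shows "continuous_on {0..} f"
  unfolding continuous_on_eq_continuous_within
proof
  fix x :: real assume "x \<in> {0..}"
  then show "continuous (at x within {0..}) f"
    using assms DERIV_continuous[of f "D x" x "{0..}"] by auto
qed

lemma ode_compare:
  fixes y z G H :: "real \<Rightarrow> real" and a :: real
  assumes y: "\<forall>t\<ge>0. (y has_real_derivative (a * y t + G t)) (at t within {0..})"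
    and z: "\<forall>t\<ge>0. (z has_real_derivative (a * z t + H t)) (at t within {0..})"
    and GH: "\<forall>t\<ge>0. G t \<le> H t" and y0: "y 0 \<le> z 0" and t: "t \<ge> 0"
  shows "y t \<le> z t"
proof -
  define w where "w = (\<lambda>u. exp (- (a * u)) * (z u - y u))"
  have wd: "(w has_real_derivative exp (- (a * s)) * (H s - G s)) (at s within {0..})" if "s \<ge> 0" for s
  proof -
    have e: "((\<lambda>s. exp (- (a * s))) has_real_derivative exp (- (a * s)) * (-a)) (at s within {0..})"
      by (auto intro!: derivative_eq_intros)
    have "((\<lambda>s. z s - y s) has_real_derivative (a * z s + H s) - (a * y s + G s)) (at s within {0..})"
      using y z that by (auto intro!: derivative_eq_intros)
    from DERIV_mult[OF e this] show ?thesis unfolding w_def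
      by (simp add: algebra_simps)
  qed
  have cont: "continuous_on {0..} w"
    by (rule deriv_within_cont_on[of w "\<lambda>s. exp (- (a * s)) * (H s - G s)"]) (use wd in auto)
  have "w 0 \<le> w t"
  proof (rule DERIV_nonneg_imp_increasing_open[OF t])
    fix x assume "0 < x" "x < t"
    then show "\<exists>yy. (w has_real_derivative yy) (at x) \<and> 0 \<le> yy"
      using wd[of x] deriv_within_nonneg_at GH by (intro exI[of _ "exp (- (a * x)) * (H x - G x)"]) auto
  next
    show "continuous_on {0..t} w" using cont by (rule continuous_on_subset) auto
  qed
  then have "0 \<le> exp (- (a * t)) * (z t - y t)" using y0 unfolding w_def by simp
  then show ?thesis by (simp add: zero_le_mult_iff)
qed

lemma ode_unique:
  fixes y z G :: "real \<Rightarrow> real" and a :: real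
  assumes y: "\<forall>t\<ge>0. (y has_real_derivative (a * y t + G t)) (at t within {0..})"
    and z: "\<forall>t\<ge>0. (z has_real_derivative (a * z t + G t)) (at t within {0..})"
    and y0: "y 0 = z 0" and t: "t \<ge> 0"
  shows "y t = z t"
  using ode_compare[OF y z _ _ t] ode_compare[OF z y _ _ t] y0 by force

lemma sum_mset_count:
  fixes h :: "nat \<Rightarrow> real"
  shows "(\<Sum>n\<in>#X. h n) = (\<Sum>n\<in>set_mset X. real (count X n) * h n)"
proof (induction X)
  case empty then show ?case by simp
next
  case (add x M)
  have "(\<Sum>n\<in>set_mset (add_mset x M). real (count (add_mset x M) n) * h n)
      = (\<Sum>n\<in>insert x (set_mset M). real (count M n) * h n + (if n = x then h x else 0))"
    by (intro sum.cong) (auto simp: algebra_simps)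
  also have "\<dots> = (\<Sum>n\<in>insert x (set_mset M). real (count M n) * h n) + h x"
    by (simp add: sum.distrib)
  also have "(\<Sum>n\<in>insert x (set_mset M). real (count M n) * h n) = (\<Sum>n\<in>set_mset M. real (count M n) * h n)"
    by (cases "x \<in># M") (auto simp: not_in_iff insert_absorb)
  finally show ?case using add by simp
qed

lemma pairing_add: "pairing (A + B) f = pairing A f + pairing B f"
  by (simp add: pairing_def)

lemma pairing_single: "pairing {#n#} f = f n"
  by (simp add: pairing_def)

lemma pairing_empty: "pairing {#} f = 0"
  by (simp add: pairing_def)

lemma pairing_diff: "n \<in># X \<Longrightarrow> pairing (X - {#n#}) f = pairing X f - f n"
proof -
  assume "n \<in># X"
  then have "X = (X - {#n#}) + {#n#}" by simp
  then have "pairing X f = pairing (X - {#n#}) f + f n"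
    by (metis pairing_add pairing_single)
  then show ?thesis by simp
qed

lemma pairing_count: "pairing X f = (\<Sum>n\<in>set_mset X. real (count X n) * f n)"
  unfolding pairing_def by (rule sum_mset_count)

lemma pairing_lin: "pairing X (\<lambda>m. a * f m + b * g m) = a * pairing X f + b * pairing X g"
  unfolding pairing_count by (simp add: sum.distrib sum_distrib_left algebra_simps)

lemma pairing_nonneg: "(\<And>m. m \<in># X \<Longrightarrow> 0 \<le> f m) \<Longrightarrow> 0 \<le> pairing X f"
  unfolding pairing_count by (auto intro!: sum_nonneg)

lemma pairing_mono: "(\<And>m. m \<in># X \<Longrightarrow> f m \<le> g m) \<Longrightarrow> pairing X f \<le> pairing X g"
  unfolding pairing_count by (auto intro!: sum_mono mult_left_mono)

lemma pairing_cong: "(\<And>m. m \<in># X \<Longrightarrow> f m = g m) \<Longrightarrow> pairing X f = pairing X g"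
  unfolding pairing_count by (auto intro!: sum.cong)

locale gfi =
  fixes \<beta> \<theta> \<gamma> :: real
  assumes bpos: "\<beta> > 0" and tpos: "\<theta> > 0" and gpos: "\<gamma> > 0"
begin

definition cr :: "nat \<Rightarrow> nat \<Rightarrow> real" where
  "cr n j = \<gamma> * real n / (real j * real (j + 1))"

lemma cr_nonneg: "0 \<le> cr n j"
  unfolding cr_def using gpos by auto

definition ev :: "nat multiset \<Rightarrow> (nat multiset \<Rightarrow> real) \<Rightarrow> nat \<Rightarrow> real" where
  "ev X \<phi> n = \<theta> * real n * \<phi> (X - {#n#}) + \<beta> * real n * \<phi> (X - {#n#} + {#n + 1#})
     + (\<Sum>j=1..n-1. cr n j * \<phi> (X - {#n#} + {#j, n - j#}))"

definition Gen :: "nat multiset \<Rightarrow> (nat multiset \<Rightarrow> real) \<Rightarrow> real" where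
  "Gen X \<phi> = (\<Sum>n\<in>set_mset X. real (count X n) * ev X \<phi> n)"

definition succ :: "nat multiset \<Rightarrow> nat multiset set" where
  "succ X = (\<Union>n\<in>set_mset X. {X - {#n#}, X - {#n#} + {#n + 1#}} \<union> (\<lambda>j. X - {#n#} + {#j, n - j#}) ` {1..n-1})"

definition q :: "nat multiset \<Rightarrow> real" where
  "q X = gfi_qtot \<beta> \<theta> \<gamma> X"

definition zf :: "nat multiset \<Rightarrow> bool" where
  "zf X \<longleftrightarrow> 0 \<notin># X"

lemma finite_succ: "finite (succ X)"
  unfolding succ_def by auto

lemma zf_succ: "zf X \<Longrightarrow> Z \<in> succ X \<Longrightarrow> zf Z"
  unfolding succ_def zf_def
  by (auto dest: in_diffD)

lemma rate_nonneg: "0 \<le> gfi_rate \<beta> \<theta> \<gamma> X Z"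
  unfolding gfi_rate_def using bpos tpos gpos
  by (intro sum_nonneg mult_nonneg_nonneg add_nonneg_nonneg) auto

lemma rate_zero:
  assumes "Z \<notin> succ X" shows "gfi_rate \<beta> \<theta> \<gamma> X Z = 0"
  unfolding gfi_rate_def
proof (intro sum.neutral ballI)
  fix n assume n: "n \<in> set_mset X"
  then have "Z \<noteq> X - {#n#}" "Z \<noteq> X - {#n#} + {#n + 1#}"
    "\<And>j. j \<in> {1..n-1} \<Longrightarrow> Z \<noteq> X - {#n#} + {#j, n - j#}"
    using assms unfolding succ_def by blast+
  then show "real (count X n) * (\<theta> * real n * (if Z = X - {#n#} then 1 else 0) +
         \<beta> * real n * (if Z = X - {#n#} + {#n + 1#} then 1 else 0) +
         (\<Sum>j = 1..n - 1. \<gamma> * real n / (real j * real (j + 1)) *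
            (if Z = X - {#n#} + {#j, n - j#} then 1 else 0))) = 0"
    by simp
qed

lemma ev_lin: "ev X (\<lambda>Z. a * \<phi> Z + b * \<psi> Z) n = a * ev X \<phi> n + b * ev X \<psi> n"
  unfolding ev_def by (simp add: sum.distrib sum_distrib_left algebra_simps)

lemma Gen_lin: "Gen X (\<lambda>Z. a * \<phi> Z + b * \<psi> Z) = a * Gen X \<phi> + b * Gen X \<psi>"
  unfolding Gen_def ev_lin by (simp add: sum.distrib sum_distrib_left algebra_simps)

lemma Gen_add: "Gen X (\<lambda>Z. \<phi> Z + \<psi> Z) = Gen X \<phi> + Gen X \<psi>"
  using Gen_lin[of X 1 \<phi> 1 \<psi>] by simp

lemma Gen_diff: "Gen X (\<lambda>Z. \<phi> Z - \<psi> Z) = Gen X \<phi> - Gen X \<psi>"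
  using Gen_lin[of X 1 \<phi> "-1" \<psi>] by simp

lemma Gen_cmult: "Gen X (\<lambda>Z. a * \<phi> Z) = a * Gen X \<phi>"
  using Gen_lin[of X a \<phi> 0 \<psi>] by simp

lemma Gen_zero: "Gen X (\<lambda>Z. 0) = 0"
  using Gen_cmult[of X 0 "\<lambda>_. 0"] by simp

lemma Gen_sum: "finite I \<Longrightarrow> Gen X (\<lambda>Z. \<Sum>i\<in>I. \<phi> i Z) = (\<Sum>i\<in>I. Gen X (\<phi> i))"
  by (induction I rule: finite_induct) (auto simp: Gen_zero Gen_add)

lemma succ_memI:
  assumes "n \<in># X"
  shows "X - {#n#} \<in> succ X" "X - {#n#} + {#n + 1#} \<in> succ X"
    "j \<in> {1..n-1} \<Longrightarrow> X - {#n#} + {#j, n - j#} \<in> succ X"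
proof -
  show "X - {#n#} \<in> succ X" "X - {#n#} + {#n + 1#} \<in> succ X"
    using assms unfolding succ_def by blast+
  assume "j \<in> {1..n-1}"
  then have "X - {#n#} + {#j, n - j#} \<in> (\<lambda>j. X - {#n#} + {#j, n - j#}) ` {1..n-1}" by (rule imageI)
  then show "X - {#n#} + {#j, n - j#} \<in> succ X" unfolding succ_def using assms by blast
qed

lemma Gen_cong: "(\<And>Z. Z \<in> succ X \<Longrightarrow> \<phi> Z = \<psi> Z) \<Longrightarrow> Gen X \<phi> = Gen X \<psi>"
  unfolding Gen_def ev_def using succ_memI
  by (intro sum.cong refl) (auto intro!: sum.cong)

lemma Gen_mono: "(\<And>Z. Z \<in> succ X \<Longrightarrow> \<phi> Z \<le> \<psi> Z) \<Longrightarrow> Gen X \<phi> \<le> Gen X \<psi>"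
  unfolding Gen_def ev_def using succ_memI bpos tpos cr_nonneg
  by (intro sum_mono mult_left_mono add_mono) (auto intro!: sum_mono mult_left_mono)

lemma Gen_nonneg: "(\<And>Z. Z \<in> succ X \<Longrightarrow> 0 \<le> \<phi> Z) \<Longrightarrow> 0 \<le> Gen X \<phi>"
  using Gen_mono[of X "\<lambda>_. 0" \<phi>] by (simp add: Gen_zero)

lemma Gen_const: "Gen X (\<lambda>Z. c) = c * q X"
  unfolding Gen_def ev_def q_def gfi_qtot_def cr_def
  by (simp add: sum_distrib_left sum_distrib_right algebra_simps)

lemma q_nonneg: "0 \<le> q X"
  unfolding q_def gfi_qtot_def using bpos tpos gpos
  by (intro sum_nonneg mult_nonneg_nonneg add_nonneg_nonneg) auto

end

context gfi begin

lemma rate_Gen: "(\<Sum>Z\<in>succ X. gfi_rate \<beta> \<theta> \<gamma> X Z * \<phi> Z) = Gen X \<phi>"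
proof -
  let ?S = "succ X"
  have eq: "gfi_rate \<beta> \<theta> \<gamma> X Z * \<phi> Z = (\<Sum>n\<in>set_mset X. real (count X n) *
      (\<theta> * real n * (if Z = X - {#n#} then \<phi> Z else 0)
       + \<beta> * real n * (if Z = X - {#n#} + {#n + 1#} then \<phi> Z else 0)
       + (\<Sum>j=1..n-1. cr n j * (if Z = X - {#n#} + {#j, n - j#} then \<phi> Z else 0))))" for Z
  proof -
    have ite: "(if P then 1 else 0) * v = (if P then v else (0::real))" for P v by simp
    have t: "real c * (a * (if P then 1 else 0) + b * (if Q then 1 else 0) + (\<Sum>j\<in>J. d j * (if R j then 1 else 0))) * v
       = real c * (a * (if P then v else 0) + b * (if Q then v else 0) + (\<Sum>j\<in>J. d j * (if R j then v else 0)))"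
      for c a b P Q J d R and v :: real
      by (simp add: ring_distribs sum_distrib_right mult.assoc ite)
    show ?thesis
      unfolding gfi_rate_def cr_def[symmetric] sum_distrib_right
      by (intro sum.cong refl t)
  qed
  have inner: "(\<Sum>Z\<in>?S. real (count X n) *
      (\<theta> * real n * (if Z = X - {#n#} then \<phi> Z else 0)
       + \<beta> * real n * (if Z = X - {#n#} + {#n + 1#} then \<phi> Z else 0)
       + (\<Sum>j=1..n-1. cr n j * (if Z = X - {#n#} + {#j, n - j#} then \<phi> Z else 0))))
     = real (count X n) * ev X \<phi> n" if n: "n \<in> set_mset X" for n
  proof -
    have "(\<Sum>Z\<in>?S. real (count X n) *
      (\<theta> * real n * (if Z = X - {#n#} then \<phi> Z else 0)
       + \<beta> * real n * (if Z = X - {#n#} + {#n + 1#} then \<phi> Z else 0)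
       + (\<Sum>j=1..n-1. cr n j * (if Z = X - {#n#} + {#j, n - j#} then \<phi> Z else 0))))
      = real (count X n) * (\<theta> * real n * (\<Sum>Z\<in>?S. if Z = X - {#n#} then \<phi> Z else 0)
       + \<beta> * real n * (\<Sum>Z\<in>?S. if Z = X - {#n#} + {#n + 1#} then \<phi> Z else 0)
       + (\<Sum>j=1..n-1. cr n j * (\<Sum>Z\<in>?S. if Z = X - {#n#} + {#j, n - j#} then \<phi> Z else 0)))"
    proof -
      have s1: "(\<Sum>Z\<in>?S. \<Sum>j=1..n-1. cr n j * (if Z = X - {#n#} + {#j, n - j#} then \<phi> Z else 0))
        = (\<Sum>j=1..n-1. cr n j * (\<Sum>Z\<in>?S. if Z = X - {#n#} + {#j, n - j#} then \<phi> Z else 0))"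
        by (subst sum.swap) (simp add: sum_distrib_left)
      show ?thesis
        by (simp only: sum.distrib sum_distrib_left[symmetric] s1 flip: sum_distrib_left)
    qed
    also have "\<dots> = real (count X n) * ev X \<phi> n"
      using succ_memI[of n X] n unfolding ev_def
      by (simp add: sum.delta[OF finite_succ])
    finally show ?thesis .
  qed
  have "(\<Sum>Z\<in>?S. gfi_rate \<beta> \<theta> \<gamma> X Z * \<phi> Z) = (\<Sum>n\<in>set_mset X. \<Sum>Z\<in>?S. real (count X n) *
      (\<theta> * real n * (if Z = X - {#n#} then \<phi> Z else 0)
       + \<beta> * real n * (if Z = X - {#n#} + {#n + 1#} then \<phi> Z else 0)
       + (\<Sum>j=1..n-1. cr n j * (if Z = X - {#n#} + {#j, n - j#} then \<phi> Z else 0))))"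
    unfolding eq by (rule sum.swap)
  also have "\<dots> = Gen X \<phi>"
    unfolding Gen_def by (intro sum.cong refl inner) 
  finally show ?thesis .
qed

lemma ev_shift1:
  assumes "n \<in># Z1"
  shows "ev (Z1 + Z2) \<phi> n = ev Z1 (\<lambda>W. \<phi> (W + Z2)) n"
proof -
  have e: "Z1 + Z2 - {#n#} = Z1 - {#n#} + Z2"
    using assms by (metis add.commute diff_union_single_conv)
  show ?thesis unfolding ev_def e by simp
qed

lemma ev_shift2:
  assumes "n \<in># Z2"
  shows "ev (Z1 + Z2) \<phi> n = ev Z2 (\<lambda>W. \<phi> (Z1 + W)) n"
proof -
  have e: "Z1 + Z2 - {#n#} = Z1 + (Z2 - {#n#})"
    using assms by (metis diff_union_single_conv)
  show ?thesis unfolding ev_def e by simp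
qed

lemma Gen_union: "Gen (Z1 + Z2) \<phi> = Gen Z1 (\<lambda>W. \<phi> (W + Z2)) + Gen Z2 (\<lambda>W. \<phi> (Z1 + W))"
proof -
  have "Gen (Z1 + Z2) \<phi> = (\<Sum>n\<in>set_mset (Z1 + Z2). real (count Z1 n) * ev (Z1 + Z2) \<phi> n)
      + (\<Sum>n\<in>set_mset (Z1 + Z2). real (count Z2 n) * ev (Z1 + Z2) \<phi> n)"
    unfolding Gen_def by (simp add: sum.distrib algebra_simps)
  also have "(\<Sum>n\<in>set_mset (Z1 + Z2). real (count Z1 n) * ev (Z1 + Z2) \<phi> n)
      = (\<Sum>n\<in>set_mset Z1. real (count Z1 n) * ev (Z1 + Z2) \<phi> n)"
    by (rule sum.mono_neutral_right) (auto simp: not_in_iff)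
  also have "\<dots> = Gen Z1 (\<lambda>W. \<phi> (W + Z2))"
    unfolding Gen_def by (intro sum.cong refl) (simp add: ev_shift1)
  also have "(\<Sum>n\<in>set_mset (Z1 + Z2). real (count Z2 n) * ev (Z1 + Z2) \<phi> n)
      = (\<Sum>n\<in>set_mset Z2. real (count Z2 n) * ev (Z1 + Z2) \<phi> n)"
    by (rule sum.mono_neutral_right) (auto simp: not_in_iff)
  also have "\<dots> = Gen Z2 (\<lambda>W. \<phi> (Z1 + W))"
    unfolding Gen_def by (intro sum.cong refl) (simp add: ev_shift2)
  finally show ?thesis .
qed

lemma pairing_add_mset: "pairing (add_mset a X) f = f a + pairing X f"
  by (simp add: pairing_def)

lemma ev_pairing:
  assumes "n \<in># X"
  shows "ev X (\<lambda>Z. pairing Z f) n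
    = (\<theta> * real n + \<beta> * real n + (\<Sum>j=1..n-1. cr n j)) * pairing X f + gfi_L \<beta> \<theta> \<gamma> f n"
proof -
  have a: "pairing (X - {#n#}) f = pairing X f - f n" using assms by (rule pairing_diff)
  have b: "pairing (X - {#n#} + {#n + 1#}) f = pairing X f - f n + f (n + 1)"
    using a by (simp add: pairing_add_mset)
  have c: "pairing (X - {#n#} + {#j, n - j#}) f = pairing X f - f n + f j + f (n - j)" for j
    using a by (simp add: pairing_add_mset)
  have d: "(\<Sum>j=1..n-1. cr n j * (pairing X f - f n + f j + f (n - j)))
     = (\<Sum>j=1..n-1. cr n j) * pairing X f + (\<Sum>j=1..n-1. cr n j * (f j + f (n - j) - f n))"
    unfolding sum_distrib_right sum.distrib[symmetric] by (intro sum.cong refl) (simp add: algebra_simps)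
  show ?thesis unfolding ev_def a b c d gfi_L_def cr_def[symmetric]
    by (simp add: algebra_simps)
qed

lemma Gen_pairing: "Gen X (\<lambda>Z. pairing Z f) = q X * pairing X f + pairing X (gfi_L \<beta> \<theta> \<gamma> f)"
proof -
  have "Gen X (\<lambda>Z. pairing Z f) = (\<Sum>n\<in>set_mset X. real (count X n) *
      ((\<theta> * real n + \<beta> * real n + (\<Sum>j=1..n-1. cr n j)) * pairing X f + gfi_L \<beta> \<theta> \<gamma> f n))"
    unfolding Gen_def by (intro sum.cong refl) (simp add: ev_pairing)
  also have "\<dots> = q X * pairing X f + pairing X (gfi_L \<beta> \<theta> \<gamma> f)"
    unfolding q_def gfi_qtot_def pairing_count cr_def
    by (simp add: sum.distrib sum_distrib_left sum_distrib_right algebra_simps)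
  finally show ?thesis .
qed

lemma g: "1 - 1 / (x + 1) + 1 / ((x + 1) * (x + 2)) = 1 - 1 / (x + 2)" if "x \<ge> 0" for x :: real
proof -
  have a: "x + 1 > 0" "x + 2 > 0" using that by auto
  have "1 / ((x + 1) * (x + 2)) = 1 / (x + 1) - 1 / (x + 2)"
    using a by (simp add: field_simps)
  then show ?thesis by linarith
qed
lemma telesc0: "(\<Sum>j=1..m. 1 / (real j * real (j + 1))) = 1 - 1 / real (m + 1)"
  proof (induction m)
    case 0 then show ?case by simp
  next
    case (Suc m)
    have "(\<Sum>j=1..Suc m. 1 / (real j * real (j + 1))) = (\<Sum>j=1..m. 1 / (real j * real (j + 1))) + 1 / (real (Suc m) * real (Suc m + 1))"
      by (rule sum.cl_ivl_Suc[THEN trans]) simp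
    also have "\<dots> = 1 - 1 / (real m + 1) + 1 / ((real m + 1) * (real m + 2))" using Suc by (simp add: add.commute)
    also have "\<dots> = 1 - 1 / (real m + 2)" by (rule g) simp
    also have "\<dots> = 1 - 1 / real (Suc m + 1)" by simp
    finally show ?case .
  qed
lemma telesc: "(\<Sum>j=1..n-1. 1 / (real j * real (j + 1))) \<le> 1"
  unfolding telesc0 by simp

definition V1 :: "nat multiset \<Rightarrow> real" where "V1 X = pairing X real"

lemma q_bound: "q X \<le> (\<theta> + \<beta> + \<gamma>) * V1 X"
proof -
  have "q X = (\<Sum>n\<in>set_mset X. real (count X n) * (\<theta> * real n + \<beta> * real n + \<gamma> * real n * (\<Sum>j=1..n-1. 1 / (real j * real (j + 1)))))"
    unfolding q_def gfi_qtot_def by (intro sum.cong refl) (simp add: sum_distrib_left)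
  also have "\<dots> \<le> (\<Sum>n\<in>set_mset X. real (count X n) * ((\<theta> + \<beta> + \<gamma>) * real n))"
  proof (intro sum_mono mult_left_mono)
    fix n
    have "\<gamma> * real n * (\<Sum>j=1..n-1. 1 / (real j * real (j + 1))) \<le> \<gamma> * real n * 1"
      using telesc gpos by (intro mult_left_mono) auto
    then show "\<theta> * real n + \<beta> * real n + \<gamma> * real n * (\<Sum>j=1..n-1. 1 / (real j * real (j + 1)))
      \<le> (\<theta> + \<beta> + \<gamma>) * real n" by (simp add: algebra_simps)
  qed simp
  also have "\<dots> = (\<theta> + \<beta> + \<gamma>) * V1 X"
    unfolding V1_def pairing_count by (simp add: sum_distrib_left algebra_simps)
  finally show ?thesis .
qed

end

lemma integral_flip:
  fixes h :: "real \<Rightarrow> real"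
  shows "integral {0..t} (\<lambda>s. h (t - s)) = integral {0..t} h"
proof -
  let ?k = "\<lambda>x. h (t + x)"
  have "integral {0..t} (\<lambda>s. h (t - s)) = integral {- 0 .. - (- t)} (\<lambda>x. ?k (- x))" by simp
  also have "\<dots> = integral {-t..0} ?k" using Henstock_Kurzweil_Integration.integral_reflect_real[of 0 "-t" ?k] by simp
  also have "\<dots> = integral {-t..0} (h \<circ> (+) t)" by (simp add: comp_def)
  also have "\<dots> = integral {-t + t..0 + t} h" by (rule integral_shift_Icc_real)
  finally show ?thesis by simp
qed

lemma int_deriv:
  fixes H :: "real \<Rightarrow> real"
  assumes "continuous_on {0..} H" "t \<ge> 0"
  shows "((\<lambda>s. integral {0..s} H) has_real_derivative H t) (at t within {0..})"
proof -
  have c: "continuous_on {0..t+1} H" using assms(1) by (rule continuous_on_subset) auto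
  have "((\<lambda>s. integral {0..s} H) has_vector_derivative H t) (at t within {0..t+1})"
    using integral_has_vector_derivative[OF c] assms(2) by simp
  then have d: "((\<lambda>s. integral {0..s} H) has_real_derivative H t) (at t within {0..t+1})"
    by (simp add: has_real_derivative_iff_has_vector_derivative)
  have "at t within {0..t+1} = at t within {0..}"
    by (rule at_within_nhd[of _ "ball t 1"]) (auto simp: dist_real_def)
  then show ?thesis using d by simp
qed

lemma deriv_cont_on: 
  assumes "\<And>t. t \<ge> 0 \<Longrightarrow> (f has_real_derivative D t) (at t within {0..})"
  shows "continuous_on {0..} f"
  using deriv_within_cont_on[of f D] assms by auto

context gfi begin

lemma Gen_rate: "Gen X \<phi> = (\<Sum>Z\<in>succ X. gfi_rate \<beta> \<theta> \<gamma> X Z * \<phi> Z)"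
  by (rule rate_Gen[symmetric])

lemma Gen_deriv:
  assumes "\<And>Z. Z \<in> succ X \<Longrightarrow> ((\<lambda>t. f Z t) has_real_derivative f' Z) (at x within S)"
  shows "((\<lambda>t. Gen X (\<lambda>Z. f Z t)) has_real_derivative Gen X f') (at x within S)"
  unfolding Gen_rate by (intro DERIV_sum DERIV_cmult assms)

fun reach :: "nat \<Rightarrow> nat multiset \<Rightarrow> nat multiset set" where
  "reach 0 X = {X}"
| "reach (Suc k) X = (\<Union>Z\<in>succ X. reach k Z)"

lemma finite_reach: "finite (reach k X)"
  by (induction k arbitrary: X) (auto simp: finite_succ)

lemma zf_reach: "zf X \<Longrightarrow> Y \<in> reach k X \<Longrightarrow> zf Y"
  by (induction k arbitrary: X) (auto dest: zf_succ)

fun p :: "nat \<Rightarrow> real \<Rightarrow> nat multiset \<Rightarrow> nat multiset \<Rightarrow> real" where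
  "p 0 t X Y = (if X = Y then exp (- (q X * t)) else 0)"
| "p (Suc k) t X Y = integral {0..t} (\<lambda>u. exp (- (q X * (t - u))) * Gen X (\<lambda>Z. p k u Z Y))"

lemma p_Suc_alt: "p (Suc k) t X Y = exp (- (q X * t)) * integral {0..t} (\<lambda>u. exp (q X * u) * Gen X (\<lambda>Z. p k u Z Y))"
proof -
  have "(\<lambda>u. exp (- (q X * (t - u))) * Gen X (\<lambda>Z. p k u Z Y))
      = (\<lambda>u. exp (- (q X * t)) * (exp (q X * u) * Gen X (\<lambda>Z. p k u Z Y)))"
    by (rule ext) (simp add: algebra_simps flip: exp_add)
  then show ?thesis by simp
qed

lemma p_deriv:
  "t \<ge> 0 \<Longrightarrow> ((\<lambda>t. p k t X Y) has_real_derivative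
     (- q X * p k t X Y + (if k = 0 then 0 else Gen X (\<lambda>Z. p (k - 1) t Z Y)))) (at t within {0..})"
proof (induction k arbitrary: t X Y)
  case 0
  show ?case by (cases "X = Y") (auto intro!: derivative_eq_intros)
next
  case (Suc k)
  let ?G = "\<lambda>u. Gen X (\<lambda>Z. p k u Z Y)"
  have Gd: "(?G has_real_derivative Gen X (\<lambda>Z. - q Z * p k u Z Y + (if k = 0 then 0 else Gen Z (\<lambda>W. p (k - 1) u W Y)))) (at u within {0..})"
    if "u \<ge> 0" for u
    using Suc.IH[OF that] by (intro Gen_deriv) auto
  have Gc: "continuous_on {0..} ?G" using Gd by (rule deriv_cont_on)
  have Hc: "continuous_on {0..} (\<lambda>u. exp (q X * u) * ?G u)"
    by (intro continuous_intros Gc)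
  have Id: "((\<lambda>s. integral {0..s} (\<lambda>u. exp (q X * u) * ?G u)) has_real_derivative exp (q X * t) * ?G t) (at t within {0..})"
    by (rule int_deriv[OF Hc Suc.prems])
  have Ed: "((\<lambda>s. exp (- (q X * s))) has_real_derivative exp (- (q X * t)) * (- q X)) (at t within {0..})"
    by (auto intro!: derivative_eq_intros)
  show ?case unfolding p_Suc_alt
    by (rule DERIV_cong[OF DERIV_mult[OF Ed Id]]) (simp add: algebra_simps flip: exp_add)
qed

lemma p_cont: "continuous_on {0..} (\<lambda>t. p k t X Y)"
  using p_deriv by (rule deriv_cont_on)

lemma p_zero_time: "p k 0 X Y = (if k = 0 \<and> X = Y then 1 else 0)"
  by (cases k) auto

lemma p_nonneg: "t \<ge> 0 \<Longrightarrow> 0 \<le> p k t X Y"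
proof (induction k arbitrary: t X Y)
  case 0 then show ?case by simp
next
  case (Suc k)
  have c: "continuous_on {0..t} (\<lambda>u. exp (- (q X * (t - u))) * Gen X (\<lambda>Z. p k u Z Y))"
    unfolding Gen_rate
    by (intro continuous_intros continuous_on_subset[OF p_cont]) auto
  show ?case unfolding p.simps
    by (rule integral_nonneg[OF integrable_continuous_interval[OF c]])
       (auto intro!: mult_nonneg_nonneg Gen_nonneg Suc.IH)
qed

lemma p_reach: "Y \<notin> reach k X \<Longrightarrow> p k t X Y = 0"
proof (induction k arbitrary: t X)
  case 0 then show ?case by simp
next
  case (Suc k)
  have "Gen X (\<lambda>Z. p k u Z Y) = Gen X (\<lambda>Z. 0)" for u
    using Suc by (intro Gen_cong) auto
  then show ?case by (simp add: Gen_zero)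
qed

end

context gfi begin

definition P :: "nat \<Rightarrow> real \<Rightarrow> nat multiset \<Rightarrow> (nat multiset \<Rightarrow> real) \<Rightarrow> real" where
  "P k t X g = (\<Sum>Y\<in>reach k X. p k t X Y * g Y)"

lemma P_superset: "finite A \<Longrightarrow> reach k X \<subseteq> A \<Longrightarrow> P k t X g = (\<Sum>Y\<in>A. p k t X Y * g Y)"
  unfolding P_def by (rule sum.mono_neutral_left) (auto simp: p_reach)

lemma reach_succ_sub: "Z \<in> succ X \<Longrightarrow> reach k Z \<subseteq> reach (Suc k) X"
  by auto

lemma P_lin: "P k t X (\<lambda>Y. a * g Y + b * h Y) = a * P k t X g + b * P k t X h"
  unfolding P_def by (simp add: sum.distrib sum_distrib_left algebra_simps)

lemma P_add: "P k t X (\<lambda>Y. g Y + h Y) = P k t X g + P k t X h"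
  using P_lin[of k t X 1 g 1 h] by simp

lemma P_diff: "P k t X (\<lambda>Y. g Y - h Y) = P k t X g - P k t X h"
  using P_lin[of k t X 1 g "-1" h] by simp

lemma P_cmult: "P k t X (\<lambda>Y. a * g Y) = a * P k t X g"
  using P_lin[of k t X a g 0 g] by simp

lemma P_zero: "P k t X (\<lambda>Y. 0) = 0"
  unfolding P_def by simp

lemma P_sum: "finite I \<Longrightarrow> P k t X (\<lambda>Y. \<Sum>i\<in>I. g i Y) = (\<Sum>i\<in>I. P k t X (g i))"
  by (induction I rule: finite_induct) (auto simp: P_zero P_add)

lemma P_cong: "(\<And>Y. Y \<in> reach k X \<Longrightarrow> g Y = h Y) \<Longrightarrow> P k t X g = P k t X h"
  unfolding P_def by (auto intro!: sum.cong)

lemma P_mono: "t \<ge> 0 \<Longrightarrow> (\<And>Y. Y \<in> reach k X \<Longrightarrow> g Y \<le> h Y) \<Longrightarrow> P k t X g \<le> P k t X h"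
  unfolding P_def by (auto intro!: sum_mono mult_left_mono p_nonneg)

lemma P_nonneg: "t \<ge> 0 \<Longrightarrow> (\<And>Y. Y \<in> reach k X \<Longrightarrow> 0 \<le> g Y) \<Longrightarrow> 0 \<le> P k t X g"
  using P_mono[of t k X "\<lambda>_. 0" g] by (simp add: P_zero)

lemma P_abs: "t \<ge> 0 \<Longrightarrow> \<bar>P k t X g\<bar> \<le> P k t X (\<lambda>Y. \<bar>g Y\<bar>)"
  unfolding P_def using p_nonneg
  by (auto intro!: order.trans[OF sum_abs] sum_mono simp: abs_mult)

lemma P_zero_time: "P k 0 X g = (if k = 0 then g X else 0)"
  unfolding P_def by (cases k) (auto simp: p_zero_time)

lemma P_0: "P 0 t X g = exp (- (q X * t)) * g X"
  unfolding P_def by simp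

lemma Gen_P_swap:
  "(\<Sum>Y\<in>reach (Suc k) X. Gen X (\<lambda>Z. p k t Z Y) * g Y) = Gen X (\<lambda>Z. P k t Z g)"
proof -
  have "(\<Sum>Y\<in>reach (Suc k) X. Gen X (\<lambda>Z. p k t Z Y) * g Y)
      = (\<Sum>Y\<in>reach (Suc k) X. Gen X (\<lambda>Z. g Y * p k t Z Y))"
    by (intro sum.cong refl) (simp add: Gen_cmult mult.commute)
  also have "\<dots> = Gen X (\<lambda>Z. \<Sum>Y\<in>reach (Suc k) X. g Y * p k t Z Y)"
    by (rule Gen_sum[symmetric]) (rule finite_reach)
  also have "\<dots> = Gen X (\<lambda>Z. P k t Z g)"
  proof (rule Gen_cong)
    fix Z assume "Z \<in> succ X"
    then show "(\<Sum>Y\<in>reach (Suc k) X. g Y * p k t Z Y) = P k t Z g"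
      using P_superset[OF finite_reach reach_succ_sub] by (simp add: mult.commute)
  qed
  finally show ?thesis .
qed

lemma P_deriv_gen:
  assumes t: "t \<ge> 0" and h: "\<And>Y. ((\<lambda>s. h s Y) has_real_derivative h' Y) (at t within {0..})"
  shows "((\<lambda>s. P k s X (h s)) has_real_derivative
     (- q X * P k t X (h t) + (if k = 0 then 0 else Gen X (\<lambda>Z. P (k - 1) t Z (h t))) + P k t X h'))
     (at t within {0..})"
proof -
  have d: "((\<lambda>s. P k s X (h s)) has_real_derivative
      (\<Sum>Y\<in>reach k X. (- q X * p k t X Y + (if k = 0 then 0 else Gen X (\<lambda>Z. p (k - 1) t Z Y))) * h t Y
         + h' Y * p k t X Y)) (at t within {0..})"
    unfolding P_def by (intro DERIV_sum DERIV_mult p_deriv t h)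
  have e: "(\<Sum>Y\<in>reach k X. (- q X * p k t X Y + (if k = 0 then 0 else Gen X (\<lambda>Z. p (k - 1) t Z Y))) * h t Y
         + h' Y * p k t X Y)
     = - q X * P k t X (h t) + (\<Sum>Y\<in>reach k X. (if k = 0 then 0 else Gen X (\<lambda>Z. p (k - 1) t Z Y)) * h t Y) + P k t X h'"
    unfolding P_def sum_distrib_left sum.distrib[symmetric] by (intro sum.cong refl) (simp add: algebra_simps)
  have f: "(\<Sum>Y\<in>reach k X. (if k = 0 then 0 else Gen X (\<lambda>Z. p (k - 1) t Z Y)) * h t Y)
      = (if k = 0 then 0 else Gen X (\<lambda>Z. P (k - 1) t Z (h t)))"
  proof (cases k)
    case 0 then show ?thesis by simp
  next
    case (Suc k')
    then show ?thesis using Gen_P_swap[where k=k' and X=X and t=t and g="h t"] by simp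
  qed
  show ?thesis using d unfolding e f .
qed

lemma P_deriv:
  assumes t: "t \<ge> 0"
  shows "((\<lambda>s. P k s X g) has_real_derivative
     (- q X * P k t X g + (if k = 0 then 0 else Gen X (\<lambda>Z. P (k - 1) t Z g))))
     (at t within {0..})"
  using P_deriv_gen[of t "\<lambda>s. g" "\<lambda>_. 0" k X] t by (simp add: P_zero)

lemma P_cont: "continuous_on {0..} (\<lambda>t. P k t X g)"
  using P_deriv by (rule deriv_cont_on)

end

context gfi begin

lemma count_int_rate:
  assumes "\<And>Z. 0 \<le> S Z"
  shows "(\<integral>\<^sup>+ Z. ennreal (gfi_rate \<beta> \<theta> \<gamma> X Z) * ennreal (S Z) \<partial>count_space UNIV) = ennreal (Gen X S)"
proof -
  have "(\<integral>\<^sup>+ Z. ennreal (gfi_rate \<beta> \<theta> \<gamma> X Z) * ennreal (S Z) \<partial>count_space UNIV)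
      = (\<integral>\<^sup>+ Z. ennreal (gfi_rate \<beta> \<theta> \<gamma> X Z * S Z) \<partial>count_space UNIV)"
    using assms rate_nonneg by (simp add: ennreal_mult)
  also have "\<dots> = (\<Sum>Z\<in>succ X. ennreal (gfi_rate \<beta> \<theta> \<gamma> X Z * S Z))"
    by (rule nn_integral_count_space') (auto simp: finite_succ rate_zero)
  also have "\<dots> = ennreal (\<Sum>Z\<in>succ X. gfi_rate \<beta> \<theta> \<gamma> X Z * S Z)"
    using assms rate_nonneg by (intro sum_ennreal) auto
  finally show ?thesis by (simp add: rate_Gen)
qed

lemma p_shift_cont: "continuous_on {0..t} (\<lambda>s. p j (t - s) Z Y)"
  by (rule continuous_on_compose2[OF p_cont]) (auto intro!: continuous_intros)

lemma approx_eq: "t \<ge> 0 \<Longrightarrow> gfi_trans_approx \<beta> \<theta> \<gamma> k t X Y = ennreal (\<Sum>j<k. p j t X Y)"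
proof (induction k arbitrary: t X Y)
  case 0 then show ?case by simp
next
  case (Suc k)
  define F where "F s = exp (- (q X * s)) * Gen X (\<lambda>Z. \<Sum>j<k. p j (t - s) Z Y)" for s
  have Fc: "continuous_on {0..t} F"
    unfolding F_def Gen_rate
    by (intro continuous_intros p_shift_cont)
  have inner: "ennreal (exp (- gfi_qtot \<beta> \<theta> \<gamma> X * s)) *
      (\<integral>\<^sup>+ Z. ennreal (gfi_rate \<beta> \<theta> \<gamma> X Z) * gfi_trans_approx \<beta> \<theta> \<gamma> k (t - s) Z Y \<partial>count_space UNIV)
      = ennreal (F s)" if s: "s \<in> {0..t}" for s
  proof -
    have "(\<integral>\<^sup>+ Z. ennreal (gfi_rate \<beta> \<theta> \<gamma> X Z) * gfi_trans_approx \<beta> \<theta> \<gamma> k (t - s) Z Y \<partial>count_space UNIV)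
      = (\<integral>\<^sup>+ Z. ennreal (gfi_rate \<beta> \<theta> \<gamma> X Z) * ennreal (\<Sum>j<k. p j (t - s) Z Y) \<partial>count_space UNIV)"
      using s Suc.IH by simp
    also have "\<dots> = ennreal (Gen X (\<lambda>Z. \<Sum>j<k. p j (t - s) Z Y))"
      using s by (intro count_int_rate sum_nonneg p_nonneg) auto
    finally show ?thesis
      unfolding F_def q_def using s
      by (simp add: ennreal_mult[symmetric] Gen_nonneg sum_nonneg p_nonneg)
  qed
  have "(\<integral>\<^sup>+ s\<in>{0..t}. ennreal (exp (- gfi_qtot \<beta> \<theta> \<gamma> X * s)) *
      (\<integral>\<^sup>+ Z. ennreal (gfi_rate \<beta> \<theta> \<gamma> X Z) * gfi_trans_approx \<beta> \<theta> \<gamma> k (t - s) Z Y \<partial>count_space UNIV) \<partial>lborel)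
      = (\<integral>\<^sup>+ s\<in>{0..t}. ennreal (F s) \<partial>lborel)"
    by (rule set_nn_integral_cong) (rule refl, rule refl, rule inner, auto)
  also have "\<dots> = ennreal (integral {0..t} F)"
  proof (rule nn_integral_has_integral_lebesgue')
    show "\<And>x. x \<in> {0..t} \<Longrightarrow> 0 \<le> F x"
      unfolding F_def by (auto intro!: mult_nonneg_nonneg Gen_nonneg sum_nonneg p_nonneg)
    show "(F has_integral integral {0..t} F) {0..t}"
      using integrable_continuous_interval[OF Fc] by (rule integrable_integral)
  qed
  also have "integral {0..t} F = (\<Sum>j<k. p (Suc j) t X Y)"
  proof -
    have "integral {0..t} F = integral {0..t} (\<lambda>s. \<Sum>j<k. exp (- (q X * s)) * Gen X (\<lambda>Z. p j (t - s) Z Y))"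
      unfolding F_def by (simp add: Gen_sum sum_distrib_left)
    also have "\<dots> = (\<Sum>j<k. integral {0..t} (\<lambda>s. exp (- (q X * s)) * Gen X (\<lambda>Z. p j (t - s) Z Y)))"
      unfolding Gen_rate
      by (intro integral_sum finite_lessThan integrable_continuous_interval continuous_intros p_shift_cont)
    also have "\<dots> = (\<Sum>j<k. p (Suc j) t X Y)"
    proof (intro sum.cong refl)
      fix j
      let ?h = "\<lambda>u. exp (- (q X * (t - u))) * Gen X (\<lambda>Z. p j u Z Y)"
      have "integral {0..t} (\<lambda>s. exp (- (q X * s)) * Gen X (\<lambda>Z. p j (t - s) Z Y)) = integral {0..t} (\<lambda>s. ?h (t - s))"
        by simp
      also have "\<dots> = integral {0..t} ?h" by (rule integral_flip)
      finally show "integral {0..t} (\<lambda>s. exp (- (q X * s)) * Gen X (\<lambda>Z. p j (t - s) Z Y)) = p (Suc j) t X Y"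
        by simp
    qed
    finally show ?thesis .
  qed
  finally have I: "(\<integral>\<^sup>+ s\<in>{0..t}. ennreal (exp (- gfi_qtot \<beta> \<theta> \<gamma> X * s)) *
      (\<integral>\<^sup>+ Z. ennreal (gfi_rate \<beta> \<theta> \<gamma> X Z) * gfi_trans_approx \<beta> \<theta> \<gamma> k (t - s) Z Y \<partial>count_space UNIV) \<partial>lborel)
      = ennreal (\<Sum>j<k. p (Suc j) t X Y)" .
  have "gfi_trans_approx \<beta> \<theta> \<gamma> (Suc k) t X Y = ennreal (p 0 t X Y) + ennreal (\<Sum>j<k. p (Suc j) t X Y)"
    unfolding gfi_trans_approx.simps I by (simp add: q_def)
  also have "\<dots> = ennreal (p 0 t X Y + (\<Sum>j<k. p (Suc j) t X Y))"
    using Suc.prems by (intro ennreal_plus[symmetric] sum_nonneg p_nonneg) auto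
  also have "p 0 t X Y + (\<Sum>j<k. p (Suc j) t X Y) = (\<Sum>j<Suc k. p j t X Y)"
    by (simp only: sum.lessThan_Suc_shift)
  finally show ?case .
qed

lemma trans_eq:
  assumes t: "t \<ge> 0" shows "gfi_trans \<beta> \<theta> \<gamma> t X Y = (\<Sum>j. ennreal (p j t X Y))"
proof -
  have "gfi_trans_approx \<beta> \<theta> \<gamma> k t X Y = (\<Sum>j<k. ennreal (p j t X Y))" for k
    unfolding approx_eq[OF t] using t by (intro sum_ennreal[symmetric] p_nonneg)
  then show ?thesis unfolding gfi_trans_def suminf_eq_SUP by simp
qed

lemma Mplus_eq:
  assumes "\<And>m. 0 \<le> f m" "t \<ge> 0"
  shows "gfi_Mplus \<beta> \<theta> \<gamma> f t n = (\<Sum>j. ennreal (P j t {#n#} (\<lambda>Y. pairing Y f)))"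
proof -
  have pn: "0 \<le> pairing Y f" for Y using assms(1) by (intro pairing_nonneg) auto
  have "gfi_Mplus \<beta> \<theta> \<gamma> f t n = (\<integral>\<^sup>+ Y. (\<Sum>j. ennreal (p j t {#n#} Y * pairing Y f)) \<partial>count_space UNIV)"
  proof -
    have "gfi_trans \<beta> \<theta> \<gamma> t {#n#} Y * ennreal (pairing Y f) = (\<Sum>j. ennreal (p j t {#n#} Y * pairing Y f))" for Y
    proof -
      have "gfi_trans \<beta> \<theta> \<gamma> t {#n#} Y * ennreal (pairing Y f) = (\<Sum>j. ennreal (p j t {#n#} Y) * ennreal (pairing Y f))"
        unfolding trans_eq[OF assms(2)] by (rule ennreal_suminf_multc[symmetric])
      also have "\<dots> = (\<Sum>j. ennreal (p j t {#n#} Y * pairing Y f))"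
        using pn assms(2) by (simp add: ennreal_mult' p_nonneg)
      finally show ?thesis .
    qed
    then show ?thesis unfolding gfi_Mplus_def by simp
  qed
  also have "\<dots> = (\<Sum>j. \<integral>\<^sup>+ Y. ennreal (p j t {#n#} Y * pairing Y f) \<partial>count_space UNIV)"
    by (rule nn_integral_suminf) simp
  also have "\<dots> = (\<Sum>j. ennreal (P j t {#n#} (\<lambda>Y. pairing Y f)))"
  proof (intro suminf_cong)
    fix j
    have "(\<integral>\<^sup>+ Y. ennreal (p j t {#n#} Y * pairing Y f) \<partial>count_space UNIV)
        = (\<Sum>Y\<in>reach j {#n#}. ennreal (p j t {#n#} Y * pairing Y f))"
      by (rule nn_integral_count_space') (auto simp: finite_reach p_reach)
    also have "\<dots> = ennreal (P j t {#n#} (\<lambda>Y. pairing Y f))"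
      unfolding P_def by (rule sum_ennreal) (use assms(2) pn p_nonneg in auto)
    finally show "(\<integral>\<^sup>+ Y. ennreal (p j t {#n#} Y * pairing Y f) \<partial>count_space UNIV) = ennreal (P j t {#n#} (\<lambda>Y. pairing Y f))" .
  qed
  finally show ?thesis .
qed

end

lemma deriv_shift:
  assumes "(f has_real_derivative D) (at (s + t) within {0..})" "t \<ge> 0"
  shows "((\<lambda>s. f (s + t)) has_real_derivative D) (at s within {0..})"
proof -
  have a: "(f has_real_derivative D) (at ((\<lambda>s. s + t) s) within (\<lambda>s. s + t) ` {0..})"
    by (rule has_field_derivative_subset[OF assms(1)]) (use assms(2) in auto)
  have b: "((\<lambda>s. s + t) has_real_derivative 1) (at s within {0..})"
    by (auto intro!: derivative_eq_intros)
  show ?thesis using DERIV_image_chain[OF a b] by (simp add: comp_def)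
qed

lemma at0_nonbot: "at (0::real) within {0..} \<noteq> bot"
proof -
  have "{0::real..} - {0} = {0<..}" by auto
  then show ?thesis by (simp add: at_within_eq_bot_iff)
qed

context gfi begin

lemma q_union: "q (Z1 + Z2) = q Z1 + q Z2"
  using Gen_union[of Z1 Z2 "\<lambda>_. 1"] Gen_const[of _ 1] by simp

lemma P_Gen_swap: "P k t X (\<lambda>Y. Gen Z (\<lambda>W. F Y W)) = Gen Z (\<lambda>W. P k t X (\<lambda>Y. F Y W))"
  unfolding Gen_rate by (simp add: P_sum[OF finite_succ] P_cmult)

lemma P_deriv_inner:
  assumes "\<And>Y. ((\<lambda>t. h t Y) has_real_derivative h' Y) (at x within S)"
  shows "((\<lambda>t. P k s X (h t)) has_real_derivative P k s X h') (at x within S)"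
  unfolding P_def by (intro DERIV_sum DERIV_cmult assms)

lemma CK:
  assumes t: "t \<ge> 0"
  shows "s \<ge> 0 \<Longrightarrow> P k (s + t) X g = (\<Sum>i\<le>k. P i s X (\<lambda>Z. P (k - i) t Z g))"
proof (induction k arbitrary: X s)
  case 0
  show ?case by (simp add: P_0 distrib_left exp_add[symmetric])
next
  case (Suc k)
  define y where "y s = P (Suc k) (s + t) X g" for s
  define z where "z s = (\<Sum>i\<le>Suc k. P i s X (\<lambda>Z. P (Suc k - i) t Z g))" for s
  define G where "G s = Gen X (\<lambda>Z. P k (s + t) Z g)" for s
  have yd: "\<forall>s\<ge>0. (y has_real_derivative (- q X * y s + G s)) (at s within {0..})"
  proof (intro allI impI)
    fix s :: real assume s: "s \<ge> 0"
    have "((\<lambda>s. P (Suc k) s X g) has_real_derivative (- q X * P (Suc k) (s + t) X g + G s)) (at (s + t) within {0..})"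
      using P_deriv[of "s + t" "Suc k" X g] s t unfolding G_def by simp
    from deriv_shift[OF this t] show "(y has_real_derivative (- q X * y s + G s)) (at s within {0..})"
      unfolding y_def by simp
  qed
  have zd: "\<forall>s\<ge>0. (z has_real_derivative (- q X * z s + G s)) (at s within {0..})"
  proof (intro allI impI)
    fix s :: real assume s: "s \<ge> 0"
    have d: "(z has_real_derivative (\<Sum>i\<le>Suc k. - q X * P i s X (\<lambda>Z. P (Suc k - i) t Z g)
        + (if i = 0 then 0 else Gen X (\<lambda>Z. P (i - 1) s Z (\<lambda>Z. P (Suc k - i) t Z g))))) (at s within {0..})"
      unfolding z_def by (intro DERIV_sum P_deriv s)
    have "(\<Sum>i\<le>Suc k. (if i = 0 then 0 else Gen X (\<lambda>Z. P (i - 1) s Z (\<lambda>Z. P (Suc k - i) t Z g))))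
        = (\<Sum>i\<le>k. Gen X (\<lambda>Z. P i s Z (\<lambda>W. P (k - i) t W g)))"
      by (subst sum.atMost_Suc_shift) simp
    also have "\<dots> = Gen X (\<lambda>Z. \<Sum>i\<le>k. P i s Z (\<lambda>W. P (k - i) t W g))"
      by (rule Gen_sum[symmetric]) simp
    also have "\<dots> = G s" unfolding G_def using Suc.IH[OF s] by simp
    finally have e: "(\<Sum>i\<le>Suc k. (if i = 0 then 0 else Gen X (\<lambda>Z. P (i - 1) s Z (\<lambda>Z. P (Suc k - i) t Z g)))) = G s" .
    show "(z has_real_derivative (- q X * z s + G s)) (at s within {0..})"
      using d unfolding sum.distrib e z_def sum_distrib_left by simp
  qed
  have "y 0 = z 0" unfolding y_def z_def by (simp add: P_zero_time sum.atMost_Suc_shift)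
  from ode_unique[OF yd zd this Suc.prems] show ?case unfolding y_def z_def .
qed

lemma BR:
  "\<forall>t\<ge>0. P k t (Z1 + Z2) g = (\<Sum>i\<le>k. P i t Z1 (\<lambda>Y1. P (k - i) t Z2 (\<lambda>Y2. g (Y1 + Y2))))"
proof (induction k arbitrary: Z1 Z2)
  case 0
  show ?case by (simp add: P_0 q_union distrib_right exp_add[symmetric])
next
  case (Suc k)
  define y where "y t = P (Suc k) t (Z1 + Z2) g" for t
  define H where "H i t = (\<lambda>Y1. P (Suc k - i) t Z2 (\<lambda>Y2. g (Y1 + Y2)))" for i t
  define z where "z t = (\<Sum>i\<le>Suc k. P i t Z1 (H i t))" for t
  define G where "G t = Gen (Z1 + Z2) (\<lambda>V. P k t V g)" for t
  have yd: "\<forall>t\<ge>0. (y has_real_derivative (- q (Z1 + Z2) * y t + G t)) (at t within {0..})"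
    unfolding y_def G_def using P_deriv[of _ "Suc k" "Z1 + Z2" g] by simp
  have zd: "\<forall>t\<ge>0. (z has_real_derivative (- q (Z1 + Z2) * z t + G t)) (at t within {0..})"
  proof (intro allI impI)
    fix t :: real assume t: "t \<ge> 0"
    define H' where "H' i Y1 = - q Z2 * H i t Y1 + (if Suc k - i = 0 then 0 else Gen Z2 (\<lambda>W. P (Suc k - i - 1) t W (\<lambda>Y2. g (Y1 + Y2))))" for i Y1
    have Hd: "((\<lambda>s. H i s Y1) has_real_derivative H' i Y1) (at t within {0..})" for i Y1
      unfolding H_def H'_def by (rule P_deriv[OF t])
    have d: "(z has_real_derivative (\<Sum>i\<le>Suc k. - q Z1 * P i t Z1 (H i t)
        + (if i = 0 then 0 else Gen Z1 (\<lambda>W. P (i - 1) t W (H i t))) + P i t Z1 (H' i))) (at t within {0..})"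
      unfolding z_def by (intro DERIV_sum P_deriv_gen t Hd)
    have A: "(\<Sum>i\<le>Suc k. (if i = 0 then 0 else Gen Z1 (\<lambda>W. P (i - 1) t W (H i t)))) = Gen Z1 (\<lambda>W. P k t (W + Z2) g)"
    proof -
      have "(\<Sum>i\<le>Suc k. (if i = 0 then 0 else Gen Z1 (\<lambda>W. P (i - 1) t W (H i t))))
          = (\<Sum>i\<le>k. Gen Z1 (\<lambda>W. P i t W (\<lambda>Y1. P (k - i) t Z2 (\<lambda>Y2. g (Y1 + Y2)))))"
        by (subst sum.atMost_Suc_shift) (simp add: H_def)
      also have "\<dots> = Gen Z1 (\<lambda>W. \<Sum>i\<le>k. P i t W (\<lambda>Y1. P (k - i) t Z2 (\<lambda>Y2. g (Y1 + Y2))))"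
        by (rule Gen_sum[symmetric]) simp
      also have "\<dots> = Gen Z1 (\<lambda>W. P k t (W + Z2) g)" using Suc.IH t by simp
      finally show ?thesis .
    qed
    have PH': "P i t Z1 (H' i) = - q Z2 * P i t Z1 (H i t) + P i t Z1 (\<lambda>Y1. if Suc k - i = 0 then 0 else Gen Z2 (\<lambda>W. P (Suc k - i - 1) t W (\<lambda>Y2. g (Y1 + Y2))))" for i
      unfolding H'_def using P_lin[of i t Z1 "- q Z2" "H i t" 1] by simp
    have B: "(\<Sum>i\<le>Suc k. P i t Z1 (\<lambda>Y1. if Suc k - i = 0 then 0 else Gen Z2 (\<lambda>W. P (Suc k - i - 1) t W (\<lambda>Y2. g (Y1 + Y2)))))
        = Gen Z2 (\<lambda>W. P k t (Z1 + W) g)"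
    proof -
      have "(\<Sum>i\<le>Suc k. P i t Z1 (\<lambda>Y1. if Suc k - i = 0 then 0 else Gen Z2 (\<lambda>W. P (Suc k - i - 1) t W (\<lambda>Y2. g (Y1 + Y2)))))
          = (\<Sum>i\<le>k. P i t Z1 (\<lambda>Y1. Gen Z2 (\<lambda>W. P (k - i) t W (\<lambda>Y2. g (Y1 + Y2)))))"
      proof -
        have "(\<Sum>i\<le>Suc k. P i t Z1 (\<lambda>Y1. if Suc k - i = 0 then 0 else Gen Z2 (\<lambda>W. P (Suc k - i - 1) t W (\<lambda>Y2. g (Y1 + Y2)))))
            = (\<Sum>i\<le>k. P i t Z1 (\<lambda>Y1. if Suc k - i = 0 then 0 else Gen Z2 (\<lambda>W. P (Suc k - i - 1) t W (\<lambda>Y2. g (Y1 + Y2)))))"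
          by (simp add: P_zero)
        also have "\<dots> = (\<Sum>i\<le>k. P i t Z1 (\<lambda>Y1. Gen Z2 (\<lambda>W. P (k - i) t W (\<lambda>Y2. g (Y1 + Y2)))))"
          by (intro sum.cong refl) (simp add: Suc_diff_le)
        finally show ?thesis .
      qed
      also have "\<dots> = (\<Sum>i\<le>k. Gen Z2 (\<lambda>W. P i t Z1 (\<lambda>Y1. P (k - i) t W (\<lambda>Y2. g (Y1 + Y2)))))"
        by (simp add: P_Gen_swap)
      also have "\<dots> = Gen Z2 (\<lambda>W. \<Sum>i\<le>k. P i t Z1 (\<lambda>Y1. P (k - i) t W (\<lambda>Y2. g (Y1 + Y2))))"
        by (rule Gen_sum[symmetric]) simp
      also have "\<dots> = Gen Z2 (\<lambda>W. P k t (Z1 + W) g)" using Suc.IH t by simp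
      finally show ?thesis .
    qed
    have "(\<Sum>i\<le>Suc k. - q Z1 * P i t Z1 (H i t)
        + (if i = 0 then 0 else Gen Z1 (\<lambda>W. P (i - 1) t W (H i t))) + P i t Z1 (H' i))
        = - (q Z1 + q Z2) * z t + (\<Sum>i\<le>Suc k. (if i = 0 then 0 else Gen Z1 (\<lambda>W. P (i - 1) t W (H i t))))
          + (\<Sum>i\<le>Suc k. P i t Z1 (\<lambda>Y1. if Suc k - i = 0 then 0 else Gen Z2 (\<lambda>W. P (Suc k - i - 1) t W (\<lambda>Y2. g (Y1 + Y2)))))"
      unfolding PH' z_def sum_distrib_left sum.distrib[symmetric] by (intro sum.cong refl) (simp add: algebra_simps)
    also have "\<dots> = - q (Z1 + Z2) * z t + G t"
      unfolding A B G_def Gen_union q_union by simp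
    finally show "(z has_real_derivative (- q (Z1 + Z2) * z t + G t)) (at t within {0..})"
      using d by simp
  qed
  have "y 0 = z 0" unfolding y_def z_def H_def by (simp add: P_zero_time sum.atMost_Suc_shift)
  show ?case using ode_unique[OF yd zd \<open>y 0 = z 0\<close>] unfolding y_def z_def H_def by blast
qed

end

context gfi begin

lemma P_fwd:
  assumes s: "s \<ge> 0"
  shows "((\<lambda>s. P k s X g) has_real_derivative
     (P k s X (\<lambda>Y. - q Y * g Y) + (if k = 0 then 0 else P (k - 1) s X (\<lambda>Y. Gen Y g)))) (at s within {0..})"
proof -
  define D1 where "D1 = - q X * P k s X g + (if k = 0 then 0 else Gen X (\<lambda>Z. P (k - 1) s Z g))"
  define f1 where "f1 t = P k (t + s) X g" for t
  define f2 where "f2 t = (\<Sum>i\<le>k. P i s X (\<lambda>Z. P (k - i) t Z g))" for t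
  have d1: "(f1 has_real_derivative D1) (at 0 within {0..})"
    unfolding f1_def D1_def using deriv_shift[of "\<lambda>s. P k s X g" _ 0 s] P_deriv[OF s] s by simp
  define dP where "dP j Z = - q Z * P j 0 Z g + (if j = 0 then 0 else Gen Z (\<lambda>W. P (j - 1) 0 W g))" for j Z
  have d2: "(f2 has_real_derivative (\<Sum>i\<le>k. P i s X (dP (k - i)))) (at 0 within {0..})"
    unfolding f2_def dP_def by (intro DERIV_sum P_deriv_inner P_deriv) simp
  have eq: "f1 t = f2 t" if "t \<in> {0..}" for t
    unfolding f1_def f2_def using CK[of t s k X g] that s by (simp add: add.commute)
  have d1': "(f2 has_real_derivative D1) (at 0 within {0..})"
    by (rule has_field_derivative_transform_within[OF d1, of 1]) (auto simp: eq)
  have D: "D1 = (\<Sum>i\<le>k. P i s X (dP (k - i)))"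
    by (rule has_field_derivative_unique[OF d1' d2 at0_nonbot])
  have dPv: "dP j = (\<lambda>Z. if j = 0 then - q Z * g Z else if j = 1 then Gen Z g else 0)" for j
  proof (rule ext)
    fix Z
    show "dP j Z = (if j = 0 then - q Z * g Z else if j = 1 then Gen Z g else 0)"
    proof (cases "j = 0")
      case True then show ?thesis unfolding dP_def by (simp add: P_zero_time)
    next
      case False
      then have "Gen Z (\<lambda>W. P (j - 1) 0 W g) = (if j = 1 then Gen Z g else 0)"
        by (auto simp: P_zero_time Gen_zero)
      then show ?thesis using False unfolding dP_def by (simp add: P_zero_time)
    qed
  qed
  have S: "(\<Sum>i\<le>k. P i s X (dP (k - i))) = P k s X (\<lambda>Y. - q Y * g Y) + (if k = 0 then 0 else P (k - 1) s X (\<lambda>Y. Gen Y g))"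
  proof (cases k)
    case 0 then show ?thesis by (simp add: dPv)
  next
    case (Suc k')
    have "(\<Sum>i\<le>k'. P i s X (dP (Suc k' - i))) = (\<Sum>i\<le>k'. if i = k' then P k' s X (\<lambda>Y. Gen Y g) else 0)"
    proof (intro sum.cong refl)
      fix i assume "i \<in> {..k'}"
      then show "P i s X (dP (Suc k' - i)) = (if i = k' then P k' s X (\<lambda>Y. Gen Y g) else 0)"
      proof (cases "i = k'")
        case True then show ?thesis by (simp add: dPv)
      next
        case False
        with \<open>i \<in> {..k'}\<close> have "Suc k' - i \<noteq> 1" "Suc k' - i \<noteq> 0" by auto
        then show ?thesis using False by (simp add: dPv P_zero)
      qed
    qed
    also have "\<dots> = P k' s X (\<lambda>Y. Gen Y g)" by simp
    finally show ?thesis using Suc by (simp add: dPv)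
  qed
  show ?thesis using P_deriv[OF s, of k X g] unfolding D1_def[symmetric] D S .
qed

end

lemma powr_step:
  fixes x p :: real
  assumes x: "x \<ge> 1" and p: "p \<ge> 1"
  shows "(x + 1) powr p - x powr p \<le> p * 2 powr (p - 1) * x powr (p - 1)"
proof -
  have "\<exists>z>x. z < x + 1 \<and> (x + 1) powr p - x powr p = (x + 1 - x) * (p * z powr (p - 1))"
    by (rule MVT2) (use x in \<open>auto intro!: has_real_derivative_powr\<close>)
  then obtain z where z: "z > x" "z < x + 1" "(x + 1) powr p - x powr p = p * z powr (p - 1)" by auto
  have "z powr (p - 1) \<le> (2 * x) powr (p - 1)"
    using z x p by (intro powr_mono2) auto
  also have "\<dots> = 2 powr (p - 1) * x powr (p - 1)"
    using x by (simp add: powr_mult)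
  finally show ?thesis using z(3) p by (simp add: mult_left_mono mult.assoc)
qed

lemma powr_split:
  fixes a p :: real
  assumes "a \<ge> 0"
  shows "a powr p = a * a powr (p - 1)"
  using powr_mult_base[OF assms, of "p - 1"] by simp

lemma superadd:
  fixes a b p :: real
  assumes a: "a \<ge> 0" and b: "b \<ge> 0" and p: "p \<ge> 1"
  shows "a powr p + b powr p \<le> (a + b) powr p"
proof -
  have "a powr (p - 1) \<le> (a + b) powr (p - 1)" "b powr (p - 1) \<le> (a + b) powr (p - 1)"
    using a b p by (auto intro!: powr_mono2)
  then have "a * a powr (p - 1) + b * b powr (p - 1) \<le> a * (a + b) powr (p - 1) + b * (a + b) powr (p - 1)"
    using a b by (intro add_mono mult_left_mono) auto
  also have "\<dots> = (a + b) * (a + b) powr (p - 1)" by (simp add: algebra_simps)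
  finally show ?thesis using powr_split[OF a, of p] powr_split[OF b, of p] powr_split[of "a + b" p] a b by simp
qed

context gfi begin

lemma L_pow_bound:
  assumes r: "r \<ge> 1"
  shows "gfi_L \<beta> \<theta> \<gamma> (\<lambda>m. real m powr r) n \<le> (2 powr (r - 1) * r * \<beta> - \<theta>) * real n powr r"
proof (cases "n = 0")
  case True then show ?thesis by (simp add: gfi_L_def)
next
  case False
  then have n: "real n \<ge> 1" by simp
  have s: "(\<Sum>j=1..n-1. \<gamma> * real n / (real j * real (j + 1)) *
      (real j powr r + real (n - j) powr r - real n powr r)) \<le> 0"
  proof (intro sum_nonpos)
    fix j assume j: "j \<in> {1..n-1}"
    then have "real j powr r + real (n - j) powr r \<le> (real j + real (n - j)) powr r"
      using r by (intro superadd) auto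
    also have "real j + real (n - j) = real n" using j by auto
    finally show "\<gamma> * real n / (real j * real (j + 1)) * (real j powr r + real (n - j) powr r - real n powr r) \<le> 0"
      using gpos by (intro mult_nonneg_nonpos) auto
  qed
  have b: "\<beta> * real n * (real (n + 1) powr r - real n powr r) \<le> \<beta> * real n * (r * 2 powr (r - 1) * real n powr (r - 1))"
    using powr_step[OF n r] bpos by (intro mult_left_mono) (auto simp: add.commute)
  have b2: "real n * (r * 2 powr (r - 1) * real n powr (r - 1)) = r * 2 powr (r - 1) * real n powr r"
    using powr_split[of "real n" r] by simp
  have t: "\<theta> * real n * real n powr r \<ge> \<theta> * real n powr r"
    using n tpos by (simp add: mult_le_cancel_right1 mult_left_mono mult.assoc)
  have b3: "\<beta> * real n * (r * 2 powr (r - 1) * real n powr (r - 1)) = 2 powr (r - 1) * r * \<beta> * real n powr r"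
  proof -
    have "\<beta> * real n * (r * 2 powr (r - 1) * real n powr (r - 1)) = \<beta> * (real n * (r * 2 powr (r - 1) * real n powr (r - 1)))"
      by (simp only: mult.assoc)
    also have "\<dots> = \<beta> * (r * 2 powr (r - 1) * real n powr r)" by (simp only: b2)
    finally show ?thesis by (simp add: ac_simps)
  qed
  have L: "gfi_L \<beta> \<theta> \<gamma> (\<lambda>m. real m powr r) n = \<beta> * real n * (real (n + 1) powr r - real n powr r)
     - \<theta> * real n * real n powr r + (\<Sum>j=1..n-1. \<gamma> * real n / (real j * real (j + 1)) *
      (real j powr r + real (n - j) powr r - real n powr r))"
    unfolding gfi_L_def by (rule refl)
  have e: "(2 powr (r - 1) * r * \<beta> - \<theta>) * real n powr r = 2 powr (r - 1) * r * \<beta> * real n powr r - \<theta> * real n powr r"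
    by (simp add: algebra_simps)
  show ?thesis unfolding L e using s b b3 t by linarith
qed

lemma U_deriv:
  assumes t: "t \<ge> 0"
  shows "((\<lambda>t. \<Sum>k<Suc K. P k t X g) has_real_derivative
     (- q X * (\<Sum>k<Suc K. P k t X g) + Gen X (\<lambda>Z. \<Sum>k<K. P k t Z g))) (at t within {0..})"
proof -
  have d: "((\<lambda>t. \<Sum>k<Suc K. P k t X g) has_real_derivative
     (\<Sum>k<Suc K. - q X * P k t X g + (if k = 0 then 0 else Gen X (\<lambda>Z. P (k - 1) t Z g)))) (at t within {0..})"
    by (intro DERIV_sum P_deriv t)
  have "(\<Sum>k<Suc K. (if k = 0 then 0 else Gen X (\<lambda>Z. P (k - 1) t Z g))) = (\<Sum>k<K. Gen X (\<lambda>Z. P k t Z g))"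
    by (subst sum.lessThan_Suc_shift) simp
  also have "\<dots> = Gen X (\<lambda>Z. \<Sum>k<K. P k t Z g)" by (rule Gen_sum[symmetric]) simp
  finally have e: "(\<Sum>k<Suc K. (if k = 0 then 0 else Gen X (\<lambda>Z. P (k - 1) t Z g))) = Gen X (\<lambda>Z. \<Sum>k<K. P k t Z g)" .
  show ?thesis using d unfolding sum.distrib e sum_distrib_left[symmetric] .
qed

lemma U_zero_time: "(\<Sum>k<Suc K. P k 0 X g) = g X"
  by (subst sum.lessThan_Suc_shift) (simp add: P_zero_time)

lemma lyap:
  assumes W0: "\<And>Y. zf Y \<Longrightarrow> 0 \<le> W Y" and WG: "\<And>Y. zf Y \<Longrightarrow> Gen Y W \<le> (q Y + c) * W Y"
  shows "zf X \<Longrightarrow> t \<ge> 0 \<Longrightarrow> (\<Sum>k<K. P k t X W) \<le> exp (c * t) * W X"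
proof (induction K arbitrary: X t)
  case 0 then show ?case using W0 by simp
next
  case (Suc K)
  define y where "y t = (\<Sum>k<Suc K. P k t X W)" for t
  define z where "z t = exp (c * t) * W X" for t
  have yd: "\<forall>t\<ge>0. (y has_real_derivative (- q X * y t + Gen X (\<lambda>Z. \<Sum>k<K. P k t Z W))) (at t within {0..})"
    unfolding y_def using U_deriv by blast
  have zd: "\<forall>t\<ge>0. (z has_real_derivative (- q X * z t + (q X + c) * exp (c * t) * W X)) (at t within {0..})"
    unfolding z_def by (auto intro!: derivative_eq_intros simp: algebra_simps)
  have GH: "\<forall>t\<ge>0. Gen X (\<lambda>Z. \<Sum>k<K. P k t Z W) \<le> (q X + c) * exp (c * t) * W X"
  proof (intro allI impI)
    fix t :: real assume t: "t \<ge> 0"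
    have "Gen X (\<lambda>Z. \<Sum>k<K. P k t Z W) \<le> Gen X (\<lambda>Z. exp (c * t) * W Z)"
      using Suc.IH Suc.prems(1) t zf_succ by (intro Gen_mono) blast
    also have "\<dots> = exp (c * t) * Gen X W" by (rule Gen_cmult)
    also have "\<dots> \<le> exp (c * t) * ((q X + c) * W X)"
      using WG[OF Suc.prems(1)] by (intro mult_left_mono) auto
    finally show "Gen X (\<lambda>Z. \<Sum>k<K. P k t Z W) \<le> (q X + c) * exp (c * t) * W X" by (simp add: algebra_simps)
  qed
  have "y 0 \<le> z 0" unfolding y_def z_def U_zero_time by simp
  from ode_compare[OF yd zd GH this Suc.prems(2)] show ?case unfolding y_def z_def .
qed

end

context gfi begin

definition Vp :: "real \<Rightarrow> nat multiset \<Rightarrow> real" where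
  "Vp r Y = pairing Y (\<lambda>m. real m powr r)"

lemma Vp_nonneg: "0 \<le> Vp r Y"
  unfolding Vp_def by (intro pairing_nonneg) auto

lemma Vp_lyap:
  assumes r: "r \<ge> 1"
  shows "Gen Y (Vp r) \<le> (q Y + (2 powr (r - 1) * r * \<beta> - \<theta>)) * Vp r Y"
proof -
  have "Gen Y (Vp r) = q Y * Vp r Y + pairing Y (gfi_L \<beta> \<theta> \<gamma> (\<lambda>m. real m powr r))"
    unfolding Vp_def by (rule Gen_pairing)
  also have "pairing Y (gfi_L \<beta> \<theta> \<gamma> (\<lambda>m. real m powr r)) \<le> pairing Y (\<lambda>m. (2 powr (r - 1) * r * \<beta> - \<theta>) * real m powr r)"
    by (intro pairing_mono L_pow_bound r)
  also have "\<dots> = (2 powr (r - 1) * r * \<beta> - \<theta>) * Vp r Y"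
    unfolding Vp_def using pairing_lin[of Y "2 powr (r - 1) * r * \<beta> - \<theta>" "\<lambda>m. real m powr r" 0] by simp
  finally show ?thesis by (simp add: algebra_simps)
qed

lemma Vp_bound:
  assumes "r \<ge> 1" "t \<ge> 0" "zf X"
  shows "(\<Sum>k<K. P k t X (Vp r)) \<le> exp ((2 powr (r - 1) * r * \<beta> - \<theta>) * t) * Vp r X"
  using lyap[of "Vp r" "2 powr (r - 1) * r * \<beta> - \<theta>" X t K] Vp_nonneg Vp_lyap assms by blast

definition W :: "real \<Rightarrow> nat multiset \<Rightarrow> real" where
  "W r Y = V1 Y powr r"

lemma V1_nonneg: "0 \<le> V1 Y"
  unfolding V1_def by (intro pairing_nonneg) auto

lemma W_nonneg: "0 \<le> W r Y"
  unfolding W_def by simp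

lemma V1_ge: "n \<in># Y \<Longrightarrow> real n \<le> V1 Y"
  unfolding V1_def using pairing_diff[of n Y real] pairing_nonneg[of "Y - {#n#}" real] by simp

lemma q_expand: "q Y = (\<Sum>n\<in>set_mset Y. real (count Y n) * (\<theta> * real n + \<beta> * real n + (\<Sum>j=1..n-1. cr n j)))"
  unfolding q_def gfi_qtot_def cr_def by simp

lemma W_lyap:
  assumes r: "r \<ge> 1" and Y: "zf Y"
  shows "Gen Y (W r) \<le> (q Y + \<beta> * r * 2 powr (r - 1)) * W r Y"
proof -
  let ?V = "V1 Y"
  have ev: "ev Y (W r) n \<le> (\<theta> * real n + \<beta> * real n + (\<Sum>j=1..n-1. cr n j)) * ?V powr r
      + \<beta> * r * 2 powr (r - 1) * (real n * ?V powr (r - 1))" if n: "n \<in># Y" for n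
  proof -
    have n1: "real n \<ge> 1" using n Y unfolding zf_def by (cases n) auto
    have Vn: "real n \<le> ?V" by (rule V1_ge[OF n])
    have a: "V1 (Y - {#n#}) = ?V - real n" unfolding V1_def by (rule pairing_diff[OF n])
    have b: "V1 (Y - {#n#} + {#n + 1#}) = ?V + 1" using a unfolding V1_def by (simp add: pairing_add_mset)
    have c: "V1 (add_mset j (add_mset (n - j) (Y - {#n#}))) = ?V" if "j \<le> n" for j
      using a that unfolding V1_def by (simp add: pairing_add_mset)
    have e1: "(?V - real n) powr r \<le> ?V powr r" using Vn r by (intro powr_mono2) auto
    have e2: "(?V + 1) powr r \<le> ?V powr r + r * 2 powr (r - 1) * ?V powr (r - 1)"
      using powr_step[of ?V r] Vn n1 r by simp
    have "ev Y (W r) n = \<theta> * real n * (?V - real n) powr r + \<beta> * real n * (?V + 1) powr r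
        + (\<Sum>j=1..n-1. cr n j * ?V powr r)"
    proof -
      have "(\<Sum>j=1..n-1. cr n j * V1 (Y - {#n#} + {#j, n - j#}) powr r) = (\<Sum>j=1..n-1. cr n j * ?V powr r)"
        by (intro sum.cong refl) (auto simp: c)
      then show ?thesis unfolding ev_def W_def a b by simp
    qed
    also have "\<dots> \<le> \<theta> * real n * ?V powr r + \<beta> * real n * (?V powr r + r * 2 powr (r - 1) * ?V powr (r - 1))
        + (\<Sum>j=1..n-1. cr n j * ?V powr r)"
      using e1 e2 tpos bpos by (intro add_mono mult_left_mono order.refl) auto
    also have "\<dots> = (\<theta> * real n + \<beta> * real n + (\<Sum>j=1..n-1. cr n j)) * ?V powr r
      + \<beta> * r * 2 powr (r - 1) * (real n * ?V powr (r - 1))"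
      by (simp add: algebra_simps sum_distrib_right sum_distrib_left)
    finally show ?thesis .
  qed
  have "Gen Y (W r) \<le> (\<Sum>n\<in>set_mset Y. real (count Y n) * ((\<theta> * real n + \<beta> * real n + (\<Sum>j=1..n-1. cr n j)) * ?V powr r
      + \<beta> * r * 2 powr (r - 1) * (real n * ?V powr (r - 1))))"
    unfolding Gen_def by (intro sum_mono mult_left_mono ev) auto
  also have "\<dots> = q Y * ?V powr r + \<beta> * r * 2 powr (r - 1) * (?V * ?V powr (r - 1))"
    unfolding q_expand V1_def pairing_count
    by (simp add: sum.distrib sum_distrib_left sum_distrib_right algebra_simps)
  also have "?V * ?V powr (r - 1) = ?V powr r" using powr_split[OF V1_nonneg, of Y r] by simp
  finally show ?thesis unfolding W_def by (simp add: algebra_simps)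
qed

lemma W_bound:
  assumes "r \<ge> 1" "t \<ge> 0" "zf X"
  shows "(\<Sum>k<K. P k t X (W r)) \<le> exp (\<beta> * r * 2 powr (r - 1) * t) * W r X"
  using lyap[of "W r" "\<beta> * r * 2 powr (r - 1)" X t K] W_nonneg W_lyap assms by blast

end

context gfi begin

definition U :: "nat \<Rightarrow> real \<Rightarrow> nat multiset \<Rightarrow> real" where
  "U K t X = (\<Sum>k<K. P k t X (\<lambda>_. 1))"

lemma U_le1: "zf X \<Longrightarrow> t \<ge> 0 \<Longrightarrow> U K t X \<le> 1"
  unfolding U_def using lyap[of "\<lambda>_. 1" 0 X t K] by (simp add: Gen_const)

lemma U_mono: "t \<ge> 0 \<Longrightarrow> K \<le> K' \<Longrightarrow> U K t X \<le> U K' t X"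
  unfolding U_def by (intro sum_mono2) (auto intro!: P_nonneg)

lemma Gen_V1: "Gen X V1 \<le> (q X + \<beta>) * V1 X"
proof -
  have "Gen X V1 = q X * V1 X + pairing X (gfi_L \<beta> \<theta> \<gamma> real)"
    unfolding V1_def by (rule Gen_pairing)
  also have "pairing X (gfi_L \<beta> \<theta> \<gamma> real) \<le> pairing X (\<lambda>m. \<beta> * real m)"
  proof (intro pairing_mono)
    fix m :: nat
    have "(\<Sum>j=1..m-1. \<gamma> * real m / (real j * real (j + 1)) * (real j + real (m - j) - real m)) = 0"
      by (intro sum.neutral) auto
    then show "gfi_L \<beta> \<theta> \<gamma> real m \<le> \<beta> * real m"
      unfolding gfi_L_def using tpos by simp
  qed
  also have "pairing X (\<lambda>m. \<beta> * real m) = \<beta> * V1 X"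
    unfolding V1_def using pairing_lin[of X \<beta> real 0 real] by simp
  finally show ?thesis by (simp add: algebra_simps)
qed

definition hfun :: "real \<Rightarrow> real" where
  "hfun t = (\<theta> + \<beta> + \<gamma>) / \<beta> * (exp (\<beta> * t) - 1)"

lemma hfun_nonneg: "t \<ge> 0 \<Longrightarrow> 0 \<le> hfun t"
  unfolding hfun_def using bpos tpos gpos by (intro mult_nonneg_nonneg) auto

definition E :: "nat \<Rightarrow> real \<Rightarrow> nat multiset \<Rightarrow> real" where
  "E K t X = (\<Sum>j<K. (1 - U (Suc j) t X))"

lemma E_alt: "E K t X = real K - (\<Sum>j<K. U (Suc j) t X)"
  unfolding E_def by (simp add: sum_subtractf)

lemma U_Suc_deriv: "t \<ge> 0 \<Longrightarrow> ((\<lambda>t. U (Suc j) t X) has_real_derivative (- q X * U (Suc j) t X + Gen X (\<lambda>Z. U j t Z))) (at t within {0..})"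
  unfolding U_def by (rule U_deriv)

lemma U_zero: "U 0 t X = 0"
  unfolding U_def by simp

lemma E_bound: "zf X \<Longrightarrow> t \<ge> 0 \<Longrightarrow> E K t X \<le> hfun t * V1 X"
proof (induction K arbitrary: X t)
  case 0 then show ?case using hfun_nonneg V1_nonneg by (simp add: E_def)
next
  case (Suc K)
  define y where "y t = E (Suc K) t X" for t
  define G where "G t = Gen X (\<lambda>Z. 1 + E K t Z)" for t
  define z where "z t = hfun t * V1 X" for t
  define H where "H t = (\<beta> * hfun t + (\<theta> + \<beta> + \<gamma>)) * V1 X + q X * hfun t * V1 X" for t
  have yd: "\<forall>t\<ge>0. (y has_real_derivative (- q X * y t + G t)) (at t within {0..})"
  proof (intro allI impI)
    fix t :: real assume t: "t \<ge> 0"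
    have d: "(y has_real_derivative (\<Sum>j<Suc K. - (- q X * U (Suc j) t X + Gen X (\<lambda>Z. U j t Z)))) (at t within {0..})"
    proof -
      have dj: "((\<lambda>t. 1 - U (Suc j) t X) has_real_derivative - (- q X * U (Suc j) t X + Gen X (\<lambda>Z. U j t Z))) (at t within {0..})" for j
        using DERIV_diff[OF DERIV_const U_Suc_deriv[OF t], of 1 j X] by simp
      show ?thesis unfolding y_def E_def by (intro DERIV_sum dj)
    qed
    have s0: "(\<Sum>j<Suc K. U j t Z) = (\<Sum>j<K. U (Suc j) t Z)" for Z
      by (subst sum.lessThan_Suc_shift) (simp add: U_zero)
    have s00: "Gen X (\<lambda>Z. \<Sum>j<Suc K. U j t Z) = (\<Sum>j<Suc K. Gen X (\<lambda>Z. U j t Z))"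
      by (rule Gen_sum) simp
    have s1: "(\<Sum>j<Suc K. Gen X (\<lambda>Z. U j t Z)) = Gen X (\<lambda>Z. \<Sum>j<K. U (Suc j) t Z)"
      using s00 unfolding s0 by simp
    have s2: "G t = (1 + real K) * q X - Gen X (\<lambda>Z. \<Sum>j<K. U (Suc j) t Z)"
      unfolding G_def E_alt
      using Gen_diff[of X "\<lambda>Z. 1 + real K" "\<lambda>Z. \<Sum>j<K. U (Suc j) t Z"] Gen_const[of X "1 + real K"]
      by (simp add: algebra_simps)
    have "(\<Sum>j<Suc K. - (- q X * U (Suc j) t X + Gen X (\<lambda>Z. U j t Z))) = - q X * y t + G t"
      unfolding y_def E_alt s2 sum_negf sum.distrib s1 sum_distrib_left[symmetric]
      by (simp add: algebra_simps)
    then show "(y has_real_derivative (- q X * y t + G t)) (at t within {0..})" using d by simp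
  qed
  have zd: "\<forall>t\<ge>0. (z has_real_derivative (- q X * z t + H t)) (at t within {0..})"
  proof (intro allI impI)
    fix t :: real assume t: "t \<ge> 0"
    have "(z has_real_derivative ((\<theta> + \<beta> + \<gamma>) / \<beta> * (exp (\<beta> * t) * \<beta>) * V1 X)) (at t within {0..})"
      unfolding z_def hfun_def by (auto intro!: derivative_eq_intros)
    moreover have "(\<theta> + \<beta> + \<gamma>) / \<beta> * (exp (\<beta> * t) * \<beta>) * V1 X = - q X * z t + H t"
      unfolding z_def H_def hfun_def using bpos by (simp add: field_simps)
    ultimately show "(z has_real_derivative (- q X * z t + H t)) (at t within {0..})" by simp
  qed
  have GH: "\<forall>t\<ge>0. G t \<le> H t"
  proof (intro allI impI)
    fix t :: real assume t: "t \<ge> 0"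
    have "G t \<le> Gen X (\<lambda>Z. 1 + hfun t * V1 Z)"
      unfolding G_def using Suc.IH Suc.prems(1) t zf_succ by (intro Gen_mono add_left_mono) blast
    also have "\<dots> = q X + hfun t * Gen X V1"
      using Gen_lin[of X 1 "\<lambda>_. 1" "hfun t" V1] Gen_const[of X 1] by simp
    also have "\<dots> \<le> q X + hfun t * ((q X + \<beta>) * V1 X)"
      using Gen_V1 hfun_nonneg[OF t] by (intro add_left_mono mult_left_mono) auto
    also have "\<dots> \<le> H t"
      unfolding H_def using q_bound[of X] by (simp add: algebra_simps)
    finally show "G t \<le> H t" .
  qed
  have "y 0 \<le> z 0"
  proof -
    have "U (Suc j) 0 X = 1" for j unfolding U_def by (rule U_zero_time)
    then show ?thesis unfolding y_def z_def E_def hfun_def by simp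
  qed
  from ode_compare[OF yd zd GH this Suc.prems(2)] show ?case unfolding y_def z_def .
qed

lemma U_lim:
  assumes X: "zf X" and t: "t \<ge> 0"
  shows "(\<lambda>K. U K t X) \<longlonglongrightarrow> 1"
proof (rule tendsto_sandwich[of "\<lambda>K. 1 - hfun t * V1 X / real K" _ _ "\<lambda>_. 1"])
  show "\<forall>\<^sub>F K in sequentially. U K t X \<le> 1" using U_le1[OF X t] by simp
  show "((\<lambda>_. 1) \<longlongrightarrow> (1::real)) sequentially" by simp
  show "(\<lambda>K. 1 - hfun t * V1 X / real K) \<longlonglongrightarrow> 1"
    by (rule tendsto_eq_intros) (auto intro!: tendsto_divide_0[OF tendsto_const] filterlim_at_top_imp_at_infinity[OF filterlim_real_sequentially])
  show "\<forall>\<^sub>F K in sequentially. 1 - hfun t * V1 X / real K \<le> U K t X"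
  proof (rule eventually_sequentiallyI[of 1])
    fix K :: nat assume K: "K \<ge> 1"
    have "real K * (1 - U K t X) = (\<Sum>j<K. (1 - U K t X))" by simp
    also have "\<dots> \<le> E K t X" unfolding E_def
      by (intro sum_mono) (auto intro!: U_mono t)
    also have "\<dots> \<le> hfun t * V1 X" by (rule E_bound[OF X t])
    finally have "real K * (1 - U K t X) \<le> hfun t * V1 X" .
    then show "1 - hfun t * V1 X / real K \<le> U K t X" using K by (simp add: field_simps)
  qed
qed

lemma mass_sums: "zf X \<Longrightarrow> t \<ge> 0 \<Longrightarrow> (\<lambda>k. P k t X (\<lambda>_. 1)) sums 1"
  unfolding sums_def using U_lim unfolding U_def by simp

end

lemma ennreal_diag:
  fixes a :: "nat \<Rightarrow> nat \<Rightarrow> ennreal"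
  shows "(\<Sum>k. \<Sum>i\<le>k. a i (k - i)) = (\<Sum>i. \<Sum>j. a i j)"
proof -
  define F where "F S = (\<Sum>(i,j)\<in>S. a i j)" for S
  have T: "(\<Sum>k<K. \<Sum>i\<le>k. a i (k - i)) = F {(i,j). i + j < K}" for K
    unfolding F_def by (rule sum.triangle_reindex[symmetric])
  have R: "(\<Sum>i<N. \<Sum>j<M. a i j) = F ({..<N} \<times> {..<M})" for N M
    unfolding F_def by (rule sum.cartesian_product)
  have finT: "finite {(i, j). i + j < K}" for K :: nat
  proof -
    have "{(i, j). i + j < K} \<subseteq> {..<K} \<times> {..<K}" by auto
    then show ?thesis by (rule finite_subset) auto
  qed
  have Fmono: "finite B \<Longrightarrow> A \<subseteq> B \<Longrightarrow> F A \<le> F B" for A B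
    unfolding F_def by (rule sum_mono2) auto
  have L: "(\<Sum>k. \<Sum>i\<le>k. a i (k - i)) = (SUP K. F {(i,j). i + j < K})"
    unfolding suminf_eq_SUP T ..
  have Rr: "(\<Sum>i. \<Sum>j. a i j) = (SUP N. SUP M. F ({..<N} \<times> {..<M}))"
  proof -
    have "(\<Sum>i<N. \<Sum>j. a i j) = (\<Sum>j. \<Sum>i<N. a i j)" for N
      by (rule suminf_sum[OF summableI, symmetric])
    then have "(\<Sum>i<N. \<Sum>j. a i j) = (SUP M. F ({..<N} \<times> {..<M}))" for N
      unfolding suminf_eq_SUP R[symmetric] by (simp add: sum.swap[of _ "{..<N}"])
    then show ?thesis unfolding suminf_eq_SUP[of "\<lambda>i. \<Sum>j. a i j"] by simp
  qed
  show ?thesis unfolding L Rr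
  proof (rule antisym)
    show "(SUP K. F {(i,j). i + j < K}) \<le> (SUP N. SUP M. F ({..<N} \<times> {..<M}))"
    proof (rule SUP_least)
      fix K
      have "F {(i,j). i + j < K} \<le> F ({..<K} \<times> {..<K})" by (rule Fmono) auto
      also have "\<dots> \<le> (SUP M. F ({..<K} \<times> {..<M}))" by (rule SUP_upper) auto
      also have "\<dots> \<le> (SUP N. SUP M. F ({..<N} \<times> {..<M}))" by (rule SUP_upper) auto
      finally show "F {(i,j). i + j < K} \<le> (SUP N. SUP M. F ({..<N} \<times> {..<M}))" .
    qed
    show "(SUP N. SUP M. F ({..<N} \<times> {..<M})) \<le> (SUP K. F {(i,j). i + j < K})"
    proof (intro SUP_least)
      fix N M
      have "F ({..<N} \<times> {..<M}) \<le> F {(i,j). i + j < N + M}" by (rule Fmono[OF finT]) auto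
      also have "\<dots> \<le> (SUP K. F {(i,j). i + j < K})" by (rule SUP_upper) auto
      finally show "F ({..<N} \<times> {..<M}) \<le> (SUP K. F {(i,j). i + j < K})" .
    qed
  qed
qed

context gfi begin

definition M :: "real \<Rightarrow> nat multiset \<Rightarrow> (nat multiset \<Rightarrow> real) \<Rightarrow> real" where
  "M t X g = (\<Sum>k. P k t X g)"

definition bnd :: "(nat multiset \<Rightarrow> real) \<Rightarrow> real \<Rightarrow> real \<Rightarrow> bool" where
  "bnd g C r \<longleftrightarrow> r \<ge> 1 \<and> 0 \<le> C \<and> (\<forall>Y. zf Y \<longrightarrow> \<bar>g Y\<bar> \<le> C * W r Y)"

definition adm :: "(nat multiset \<Rightarrow> real) \<Rightarrow> bool" where
  "adm g \<longleftrightarrow> (\<exists>C r. bnd g C r)"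

definition cW :: "real \<Rightarrow> real" where "cW r = \<beta> * r * 2 powr (r - 1)"

lemma W_summable:
  assumes "zf X" "t \<ge> 0" "r \<ge> 1"
  shows "summable (\<lambda>k. P k t X (W r))"
proof (rule bounded_imp_summable)
  show "0 \<le> P n t X (W r)" for n using assms W_nonneg by (intro P_nonneg) auto
  show "sum (\<lambda>k. P k t X (W r)) {..n} \<le> exp (cW r * t) * W r X" for n
    using W_bound[OF assms(3,2,1), of "Suc n"] unfolding cW_def lessThan_Suc_atMost .
qed

lemma M_W_bound:
  assumes "zf X" "t \<ge> 0" "r \<ge> 1"
  shows "M t X (W r) \<le> exp (cW r * t) * W r X"
  unfolding M_def cW_def using W_summable[OF assms] W_bound[OF assms(3,2,1)] by (rule suminf_le_const)

lemma P_bnd: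
  assumes "zf X" "t \<ge> 0" "bnd g C r"
  shows "\<bar>P k t X g\<bar> \<le> C * P k t X (W r)"
proof -
  have "\<bar>P k t X g\<bar> \<le> P k t X (\<lambda>Y. \<bar>g Y\<bar>)" by (rule P_abs[OF assms(2)])
  also have "\<dots> \<le> P k t X (\<lambda>Y. C * W r Y)"
    using assms zf_reach unfolding bnd_def by (intro P_mono) auto
  also have "\<dots> = C * P k t X (W r)" by (rule P_cmult)
  finally show ?thesis .
qed

lemma bnd_summable_abs:
  assumes "zf X" "t \<ge> 0" "bnd g C r"
  shows "summable (\<lambda>k. \<bar>P k t X g\<bar>)"
proof (rule summable_comparison_test'[of "\<lambda>k. C * P k t X (W r)" 0])
  show "summable (\<lambda>k. C * P k t X (W r))"
    using assms W_summable unfolding bnd_def by (intro summable_mult) auto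
  show "norm \<bar>P n t X g\<bar> \<le> C * P n t X (W r)" for n using P_bnd[OF assms] by simp
qed

lemma bnd_summable:
  assumes "zf X" "t \<ge> 0" "bnd g C r"
  shows "summable (\<lambda>k. P k t X g)"
  using bnd_summable_abs[OF assms] by (rule summable_rabs_cancel)

lemma adm_summable: "adm g \<Longrightarrow> zf X \<Longrightarrow> t \<ge> 0 \<Longrightarrow> summable (\<lambda>k. P k t X g)"
  unfolding adm_def using bnd_summable by blast

lemma adm_summable_abs: "adm g \<Longrightarrow> zf X \<Longrightarrow> t \<ge> 0 \<Longrightarrow> summable (\<lambda>k. \<bar>P k t X g\<bar>)"
  unfolding adm_def using bnd_summable_abs by blast

lemma M_bnd:
  assumes "zf X" "t \<ge> 0" "bnd g C r"
  shows "\<bar>M t X g\<bar> \<le> C * exp (cW r * t) * W r X"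
proof -
  have r: "r \<ge> 1" "C \<ge> 0" using assms(3) unfolding bnd_def by auto
  have "\<bar>M t X g\<bar> \<le> (\<Sum>k. \<bar>P k t X g\<bar>)"
    unfolding M_def using bnd_summable_abs[OF assms] by (rule summable_rabs)
  also have "\<dots> \<le> (\<Sum>k. C * P k t X (W r))"
    using bnd_summable_abs[OF assms] W_summable[OF assms(1,2) r(1)] P_bnd[OF assms]
    by (intro suminf_le summable_mult) auto
  also have "\<dots> = C * M t X (W r)" unfolding M_def
    using W_summable[OF assms(1,2) r(1)] by (rule suminf_mult)
  also have "\<dots> \<le> C * (exp (cW r * t) * W r X)"
    using M_W_bound[OF assms(1,2) r(1)] r by (intro mult_left_mono) auto
  finally show ?thesis by (simp add: mult.assoc)
qed

lemma M_lin:
  assumes "adm g" "adm h" "zf X" "t \<ge> 0"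
  shows "M t X (\<lambda>Y. a * g Y + b * h Y) = a * M t X g + b * M t X h"
proof -
  have sg: "summable (\<lambda>k. P k t X g)" and sh: "summable (\<lambda>k. P k t X h)"
    using adm_summable assms by auto
  have "M t X (\<lambda>Y. a * g Y + b * h Y) = (\<Sum>k. a * P k t X g + b * P k t X h)"
    unfolding M_def P_lin ..
  also have "\<dots> = (\<Sum>k. a * P k t X g) + (\<Sum>k. b * P k t X h)"
    using sg sh by (intro suminf_add[symmetric] summable_mult)
  also have "\<dots> = a * M t X g + b * M t X h"
    unfolding M_def using sg sh by (simp add: suminf_mult)
  finally show ?thesis .
qed

lemma zf_V1: "zf Y \<Longrightarrow> V1 Y = 0 \<or> V1 Y \<ge> 1"
proof (cases "Y = {#}")
  case True then show ?thesis by (simp add: V1_def pairing_empty)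
next
  case False
  assume Y: "zf Y"
  from False obtain n where n: "n \<in># Y" by (meson multiset_nonemptyE)
  then have "n \<ge> 1" using Y unfolding zf_def by (cases n) auto
  then show ?thesis using V1_ge[OF n] by simp
qed

lemma W_mono_exp: "zf Y \<Longrightarrow> r1 \<le> r2 \<Longrightarrow> W r1 Y \<le> W r2 Y"
  using zf_V1[of Y] unfolding W_def by (auto intro: powr_mono)

lemma bnd_mono: "bnd g C r \<Longrightarrow> C \<le> C' \<Longrightarrow> r \<le> r' \<Longrightarrow> bnd g C' r'"
  unfolding bnd_def
proof (intro conjI allI impI; (elim conjE)?)
  fix Y assume "r \<ge> 1" "0 \<le> C" "\<forall>Y. zf Y \<longrightarrow> \<bar>g Y\<bar> \<le> C * W r Y" "C \<le> C'" "r \<le> r'" "zf Y"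
  then have "\<bar>g Y\<bar> \<le> C * W r Y" by auto
  also have "\<dots> \<le> C' * W r' Y"
    using W_mono_exp[OF \<open>zf Y\<close> \<open>r \<le> r'\<close>] W_nonneg \<open>0 \<le> C\<close> \<open>C \<le> C'\<close>
    by (intro mult_mono) auto
  finally show "\<bar>g Y\<bar> \<le> C' * W r' Y" .
qed auto

lemma adm_lin:
  assumes "adm g" "adm h" shows "adm (\<lambda>Y. a * g Y + b * h Y)"
proof -
  obtain C1 r1 C2 r2 where b1: "bnd g C1 r1" and b2: "bnd h C2 r2" using assms unfolding adm_def by blast
  have b1': "bnd g C1 (max r1 r2)" and b2': "bnd h C2 (max r1 r2)"
    using bnd_mono[OF b1] bnd_mono[OF b2] by auto
  have "bnd (\<lambda>Y. a * g Y + b * h Y) (\<bar>a\<bar> * C1 + \<bar>b\<bar> * C2) (max r1 r2)"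
    unfolding bnd_def
  proof (intro conjI allI impI)
    show "1 \<le> max r1 r2" using b1 unfolding bnd_def by auto
    show "0 \<le> \<bar>a\<bar> * C1 + \<bar>b\<bar> * C2" using b1 b2 unfolding bnd_def by auto
    fix Y assume Y: "zf Y"
    have "\<bar>a * g Y + b * h Y\<bar> \<le> \<bar>a\<bar> * \<bar>g Y\<bar> + \<bar>b\<bar> * \<bar>h Y\<bar>" by (simp add: abs_mult abs_triangle_ineq[THEN order.trans])
    also have "\<dots> \<le> \<bar>a\<bar> * (C1 * W (max r1 r2) Y) + \<bar>b\<bar> * (C2 * W (max r1 r2) Y)"
      using b1' b2' Y unfolding bnd_def by (intro add_mono mult_left_mono) auto
    finally show "\<bar>a * g Y + b * h Y\<bar> \<le> (\<bar>a\<bar> * C1 + \<bar>b\<bar> * C2) * W (max r1 r2) Y"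
      by (simp add: algebra_simps)
  qed
  then show ?thesis unfolding adm_def by blast
qed

lemma Vp_le_W: "r \<ge> 1 \<Longrightarrow> Vp r Y \<le> W r Y"
proof (induction Y)
  case empty then show ?case by (simp add: Vp_def W_def V1_def pairing_empty)
next
  case (add x Y)
  have "Vp r (add_mset x Y) = real x powr r + Vp r Y" unfolding Vp_def by (simp add: pairing_add_mset)
  also have "\<dots> \<le> real x powr r + V1 Y powr r" using add by (simp add: W_def)
  also have "\<dots> \<le> (real x + V1 Y) powr r" using add.prems V1_nonneg by (intro superadd) auto
  also have "\<dots> = W r (add_mset x Y)" unfolding W_def V1_def by (simp add: pairing_add_mset)
  finally show ?case .
qed

lemma pairing_abs: "\<bar>pairing Y f\<bar> \<le> pairing Y (\<lambda>m. \<bar>f m\<bar>)"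
  unfolding pairing_count by (rule order.trans[OF sum_abs]) (simp add: abs_mult)

lemma classB_bnd:
  assumes "classB f"
  shows "\<exists>C r. r \<ge> 1 \<and> 0 \<le> C \<and> (\<forall>n\<ge>1. \<bar>f n\<bar> \<le> C * real n powr r)"
proof -
  obtain p C where p: "p > 0" and C: "\<forall>n\<ge>1. \<bar>f n\<bar> \<le> C * real n powr p"
    using assms unfolding classB_def by blast
  have C0: "0 \<le> C" using C[rule_format, of 1] by simp
  have "\<bar>f n\<bar> \<le> C * real n powr (max p 1)" if "n \<ge> 1" for n
  proof -
    have "real n powr p \<le> real n powr (max p 1)" using that by (intro powr_mono) auto
    then show ?thesis using C that C0 by (meson mult_left_mono order.trans)
  qed
  then show ?thesis using C0 by (intro exI[of _ C] exI[of _ "max p 1"]) auto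
qed

lemma pairing_bnd:
  assumes "r \<ge> 1" "0 \<le> C" "\<forall>n\<ge>1. \<bar>f n\<bar> \<le> C * real n powr r"
  shows "bnd (\<lambda>Y. pairing Y f) C r"
  unfolding bnd_def
proof (intro conjI allI impI)
  fix Y assume Y: "zf Y"
  have "\<bar>pairing Y f\<bar> \<le> pairing Y (\<lambda>m. \<bar>f m\<bar>)" by (rule pairing_abs)
  also have "\<dots> \<le> pairing Y (\<lambda>m. C * real m powr r)"
  proof (rule pairing_mono)
    fix m assume "m \<in># Y"
    then have "m \<ge> 1" using Y unfolding zf_def by (cases m) auto
    then show "\<bar>f m\<bar> \<le> C * real m powr r" using assms by auto
  qed
  also have "\<dots> = C * Vp r Y" unfolding Vp_def using pairing_lin[of Y C "\<lambda>m. real m powr r" 0] by simp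
  also have "\<dots> \<le> C * W r Y" using Vp_le_W[OF assms(1)] assms(2) by (intro mult_left_mono) auto
  finally show "\<bar>pairing Y f\<bar> \<le> C * W r Y" .
qed (use assms in auto)

lemma pairing_adm: "classB f \<Longrightarrow> adm (\<lambda>Y. pairing Y f)"
  unfolding adm_def using classB_bnd pairing_bnd by blast

end

context gfi begin

lemma mass_summable: "zf X \<Longrightarrow> t \<ge> 0 \<Longrightarrow> summable (\<lambda>k. P k t X (\<lambda>_. 1))"
  using mass_sums sums_summable by blast

lemma mass_suminf: "zf X \<Longrightarrow> t \<ge> 0 \<Longrightarrow> (\<Sum>k. P k t X (\<lambda>_. 1)) = 1"
  using mass_sums sums_unique by (metis)

lemma M_additive:
  assumes adm: "adm g" and add: "\<And>Y1 Y2. g (Y1 + Y2) = g Y1 + g Y2"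
    and Z1: "zf Z1" and Z2: "zf Z2" and t: "t \<ge> 0"
  shows "M t (Z1 + Z2) g = M t Z1 g + M t Z2 g"
proof -
  define a where "a k = P k t Z1 g" for k
  define b where "b k = P k t Z2 (\<lambda>_. 1)" for k
  define a' where "a' k = P k t Z2 g" for k
  define b' where "b' k = P k t Z1 (\<lambda>_. 1)" for k
  have trm: "P k t (Z1 + Z2) g = (\<Sum>i\<le>k. a i * b (k - i)) + (\<Sum>i\<le>k. b' i * a' (k - i))" for k
  proof -
    have inner: "P j t Z2 (\<lambda>Y2. g (Y1 + Y2)) = g Y1 * b j + a' j" for j Y1
      unfolding add b_def a'_def using P_lin[of j t Z2 "g Y1" "\<lambda>_. 1" 1 g] by (simp add: mult.commute)
    have outer: "P i t Z1 (\<lambda>Y1. g Y1 * b j + a' j) = a i * b j + b' i * a' j" for i j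
      unfolding a_def b'_def using P_lin[of i t Z1 "b j" g "a' j" "\<lambda>_. 1"] by (simp add: mult.commute)
    have "P k t (Z1 + Z2) g = (\<Sum>i\<le>k. P i t Z1 (\<lambda>Y1. P (k - i) t Z2 (\<lambda>Y2. g (Y1 + Y2))))"
      using BR[of k Z1 Z2 g] t by blast
    also have "\<dots> = (\<Sum>i\<le>k. a i * b (k - i) + b' i * a' (k - i))" unfolding inner outer ..
    finally show ?thesis by (simp add: sum.distrib)
  qed
  have sa: "summable (\<lambda>k. norm (a k))" unfolding a_def using adm_summable_abs[OF adm Z1 t] by simp
  have sa': "summable (\<lambda>k. norm (a' k))" unfolding a'_def using adm_summable_abs[OF adm Z2 t] by simp
  have bnn: "b k \<ge> 0" "b' k \<ge> 0" for k unfolding b_def b'_def using t by (auto intro!: P_nonneg)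
  have sb: "summable (\<lambda>k. norm (b k))" unfolding b_def using mass_summable[OF Z2 t] bnn[unfolded b_def]
    by simp
  have sb': "summable (\<lambda>k. norm (b' k))" unfolding b'_def using mass_summable[OF Z1 t] bnn[unfolded b'_def]
    by simp
  have "M t (Z1 + Z2) g = (\<Sum>k. (\<Sum>i\<le>k. a i * b (k - i)) + (\<Sum>i\<le>k. b' i * a' (k - i)))"
    unfolding M_def trm ..
  also have "\<dots> = (\<Sum>k. \<Sum>i\<le>k. a i * b (k - i)) + (\<Sum>k. \<Sum>i\<le>k. b' i * a' (k - i))"
    by (intro suminf_add[symmetric] summable_Cauchy_product sa sb sa' sb')
  also have "\<dots> = (\<Sum>k. a k) * (\<Sum>k. b k) + (\<Sum>k. b' k) * (\<Sum>k. a' k)"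
    using Cauchy_product[OF sa sb] Cauchy_product[OF sb' sa'] by simp
  also have "\<dots> = M t Z1 g + M t Z2 g"
    unfolding a_def b_def a'_def b'_def M_def using mass_suminf[OF Z1 t] mass_suminf[OF Z2 t] by simp
  finally show ?thesis .
qed

lemma q_empty: "q {#} = 0"
  unfolding q_def gfi_qtot_def by simp

lemma reach_empty: "reach (Suc k) {#} = {}"
  by (simp add: succ_def)

lemma M_empty: "M t {#} g = g {#}"
proof -
  have "P k t {#} g = (if k = 0 then g {#} else 0)" for k
    by (cases k) (auto simp: P_def q_empty succ_def)
  then show ?thesis unfolding M_def by (simp add: sums_single[THEN sums_unique[symmetric]] del: P_def)
qed

lemma M_pairing:
  assumes f: "classB f" and t: "t \<ge> 0"
  shows "zf Z \<Longrightarrow> M t Z (\<lambda>Y. pairing Y f) = pairing Z (\<lambda>z. M t {#z#} (\<lambda>Y. pairing Y f))"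
proof (induction Z)
  case empty then show ?case by (simp add: M_empty pairing_empty)
next
  case (add x Z)
  have zx: "zf {#x#}" "zf Z" using add.prems unfolding zf_def by auto
  have "M t (add_mset x Z) (\<lambda>Y. pairing Y f) = M t ({#x#} + Z) (\<lambda>Y. pairing Y f)" by simp
  also have "\<dots> = M t {#x#} (\<lambda>Y. pairing Y f) + M t Z (\<lambda>Y. pairing Y f)"
    by (intro M_additive pairing_adm f zx t) (simp add: pairing_add)
  finally show ?case using add.IH[OF zx(2)] by (simp add: pairing_add_mset)
qed

lemma P_suminf_swap:
  assumes "\<And>Z. Z \<in> reach i X \<Longrightarrow> summable (\<lambda>j. h j Z)"
  shows "P i s X (\<lambda>Z. \<Sum>j. h j Z) = (\<Sum>j. P i s X (h j))"
    and "summable (\<lambda>j. P i s X (h j))"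
proof -
  have s: "summable (\<lambda>j. p i s X Z * h j Z)" if "Z \<in> reach i X" for Z
    using assms[OF that] by (rule summable_mult)
  show "P i s X (\<lambda>Z. \<Sum>j. h j Z) = (\<Sum>j. P i s X (h j))"
    unfolding P_def using s by (simp add: suminf_mult[symmetric] suminf_sum assms)
  show "summable (\<lambda>j. P i s X (h j))"
    unfolding P_def using s by (intro summable_sum) auto
qed

lemma bnd_M:
  assumes "bnd g C r" "t \<ge> 0"
  shows "bnd (\<lambda>Z. M t Z g) (C * exp (cW r * t)) r"
  using assms M_bnd unfolding bnd_def by auto

lemma adm_M: "adm g \<Longrightarrow> t \<ge> 0 \<Longrightarrow> adm (\<lambda>Z. M t Z g)"
  unfolding adm_def using bnd_M by blast

lemma M_semigroup_nonneg:
  assumes adm: "adm g" and g0: "\<And>Y. 0 \<le> g Y" and X: "zf X" and s: "s \<ge> 0" and t: "t \<ge> 0"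
  shows "M (s + t) X g = M s X (\<lambda>Z. M t Z g)"
proof -
  define a where "a i j = P i s X (\<lambda>Z. P j t Z g)" for i j
  have a0: "0 \<le> a i j" for i j unfolding a_def using s t g0 by (intro P_nonneg) auto
  have row: "summable (\<lambda>j. a i j)" "(\<Sum>j. a i j) = P i s X (\<lambda>Z. M t Z g)" for i
  proof -
    have sz: "summable (\<lambda>j. P j t Z g)" if "Z \<in> reach i X" for Z
      using adm_summable[OF adm zf_reach[OF X that] t] .
    show "summable (\<lambda>j. a i j)" unfolding a_def using P_suminf_swap(2)[OF sz] by simp
    show "(\<Sum>j. a i j) = P i s X (\<lambda>Z. M t Z g)" unfolding a_def M_def using P_suminf_swap(1)[OF sz] by simp
  qed
  have Mst0: "0 \<le> P k (s + t) X g" for k using s t g0 by (intro P_nonneg) auto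
  have "ennreal (M (s + t) X g) = (\<Sum>k. ennreal (P k (s + t) X g))"
    unfolding M_def using Mst0 adm_summable[OF adm X] s t by (intro suminf_ennreal2[symmetric]) auto
  also have "\<dots> = (\<Sum>k. \<Sum>i\<le>k. ennreal (a i (k - i)))"
    unfolding CK[OF t s] a_def using a0[unfolded a_def] by (simp add: sum_ennreal)
  also have "\<dots> = (\<Sum>i. \<Sum>j. ennreal (a i j))" by (rule ennreal_diag)
  also have "\<dots> = (\<Sum>i. ennreal (P i s X (\<lambda>Z. M t Z g)))"
    using row a0 by (simp add: suminf_ennreal2)
  also have "\<dots> = ennreal (M s X (\<lambda>Z. M t Z g))"
  proof -
    have nn: "0 \<le> P i s X (\<lambda>Z. M t Z g)" for i using row(2)[of i, symmetric] a0 by (auto intro: suminf_nonneg row(1))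
    have sm: "summable (\<lambda>i. P i s X (\<lambda>Z. M t Z g))" using adm_summable[OF adm_M[OF adm t] X s] .
    show ?thesis unfolding M_def[of s X "\<lambda>Z. M t Z g"] using suminf_ennreal2[OF nn sm] .
  qed
  finally have e: "ennreal (M (s + t) X g) = ennreal (M s X (\<lambda>Z. M t Z g))" .
  have "0 \<le> M (s + t) X g" unfolding M_def using Mst0 adm_summable[OF adm X] s t by (intro suminf_nonneg) auto
  moreover have "0 \<le> M s X (\<lambda>Z. M t Z g)"
  proof -
    have nn: "0 \<le> P i s X (\<lambda>Z. M t Z g)" for i using row(2)[of i, symmetric] a0 by (auto intro: suminf_nonneg row(1))
    have sm: "summable (\<lambda>i. P i s X (\<lambda>Z. M t Z g))" using adm_summable[OF adm_M[OF adm t] X s] .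
    show ?thesis unfolding M_def[of s X "\<lambda>Z. M t Z g"] using sm nn by (rule suminf_nonneg)
  qed
  ultimately show ?thesis using e by simp
qed

end

context gfi begin

lemma sum_cr_bound: "(\<Sum>j=1..n-1. cr n j) \<le> \<gamma> * real n"
proof -
  have "(\<Sum>j=1..n-1. cr n j) = \<gamma> * real n * (\<Sum>j=1..n-1. 1 / (real j * real (j + 1)))"
    unfolding cr_def sum_distrib_left by (intro sum.cong refl) simp
  also have "\<dots> \<le> \<gamma> * real n * 1" using telesc gpos by (intro mult_left_mono) auto
  finally show ?thesis by simp
qed

lemma classB_L:
  assumes "classB f" shows "classB (gfi_L \<beta> \<theta> \<gamma> f)"
proof -
  obtain C r where r: "r \<ge> 1" and C0: "0 \<le> C" and C: "\<forall>n\<ge>1. \<bar>f n\<bar> \<le> C * real n powr r"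
    using classB_bnd[OF assms] by blast
  define K where "K = C * 2 powr r * (2 * \<beta> + \<theta> + 3 * \<gamma>)"
  have "\<bar>gfi_L \<beta> \<theta> \<gamma> f n\<bar> \<le> K * real n powr (r + 1)" if n: "n \<ge> 1" for n
  proof -
    define B where "B = C * 2 powr r * real n powr r"
    have B0: "0 \<le> B" unfolding B_def using C0 by simp
    have fb: "\<bar>f m\<bar> \<le> B" if "1 \<le> m" "m \<le> n + 1" for m
    proof -
      have "real m \<le> 2 * real n" using that n by simp
      then have "real m powr r \<le> (2 * real n) powr r" using that r by (intro powr_mono2) auto
      also have "\<dots> = 2 powr r * real n powr r" by (simp add: powr_mult)
      finally have "C * real m powr r \<le> C * (2 powr r * real n powr r)" using C0 by (intro mult_left_mono)
      then show ?thesis using C that unfolding B_def by (metis mult.assoc order.trans)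
    qed
    have t1: "\<bar>\<beta> * real n * (f (n + 1) - f n)\<bar> \<le> \<beta> * real n * (2 * B)"
    proof -
      have "\<bar>f (n + 1) - f n\<bar> \<le> 2 * B" using fb[of "n + 1"] fb[of n] n by (simp add: abs_diff_le_iff) linarith
      then show ?thesis using bpos by (simp add: abs_mult mult_left_mono)
    qed
    have t2: "\<bar>\<theta> * real n * f n\<bar> \<le> \<theta> * real n * B"
      using fb[of n] n tpos by (simp add: abs_mult mult_left_mono)
    have t3: "\<bar>\<Sum>j=1..n-1. \<gamma> * real n / (real j * real (j + 1)) * (f j + f (n - j) - f n)\<bar> \<le> \<gamma> * real n * (3 * B)"
    proof -
      have "\<bar>\<Sum>j=1..n-1. \<gamma> * real n / (real j * real (j + 1)) * (f j + f (n - j) - f n)\<bar>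
          \<le> (\<Sum>j=1..n-1. cr n j * (3 * B))"
      proof (rule order.trans[OF sum_abs], intro sum_mono)
        fix j assume j: "j \<in> {1..n-1}"
        have "\<bar>f j + f (n - j) - f n\<bar> \<le> 3 * B"
          using fb[of j] fb[of "n - j"] fb[of n] j n by (simp add: abs_le_iff) linarith
        then show "\<bar>\<gamma> * real n / (real j * real (j + 1)) * (f j + f (n - j) - f n)\<bar> \<le> cr n j * (3 * B)"
          unfolding cr_def[symmetric] using cr_nonneg by (simp add: abs_mult mult_left_mono)
      qed
      also have "\<dots> = (\<Sum>j=1..n-1. cr n j) * (3 * B)" by (simp add: sum_distrib_right)
      also have "\<dots> \<le> \<gamma> * real n * (3 * B)" using sum_cr_bound B0 by (intro mult_right_mono) auto
      finally show ?thesis .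
    qed
    have "\<bar>gfi_L \<beta> \<theta> \<gamma> f n\<bar> \<le> \<beta> * real n * (2 * B) + \<theta> * real n * B + \<gamma> * real n * (3 * B)"
      unfolding gfi_L_def using t1 t2 t3 by linarith
    also have "\<dots> = K * (real n * real n powr r)" unfolding K_def B_def by (simp add: algebra_simps)
    also have "real n * real n powr r = real n powr (r + 1)" using powr_split[of "real n" "r + 1"] by simp
    finally show ?thesis .
  qed
  then show ?thesis unfolding classB_def using r by (intro exI[of _ "r + 1"] exI[of _ K]) auto
qed

lemma adm_q:
  assumes "bnd g C r" shows "adm (\<lambda>Y. q Y * g Y)"
proof -
  have "bnd (\<lambda>Y. q Y * g Y) ((\<theta> + \<beta> + \<gamma>) * C) (r + 1)"
    unfolding bnd_def
  proof (intro conjI allI impI)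
    show "1 \<le> r + 1" "0 \<le> (\<theta> + \<beta> + \<gamma>) * C" using assms bpos tpos gpos unfolding bnd_def by auto
    fix Y assume Y: "zf Y"
    have "\<bar>q Y * g Y\<bar> = q Y * \<bar>g Y\<bar>" using q_nonneg by (simp add: abs_mult)
    also have "\<dots> \<le> ((\<theta> + \<beta> + \<gamma>) * V1 Y) * (C * W r Y)"
      using q_bound[of Y] assms Y q_nonneg V1_nonneg[of Y] bpos tpos gpos unfolding bnd_def by (intro mult_mono) auto
    also have "\<dots> = (\<theta> + \<beta> + \<gamma>) * C * (V1 Y * V1 Y powr r)" unfolding W_def by (simp add: algebra_simps)
    also have "V1 Y * V1 Y powr r = W (r + 1) Y" unfolding W_def using powr_split[OF V1_nonneg, of Y "r + 1"] by simp
    finally show "\<bar>q Y * g Y\<bar> \<le> (\<theta> + \<beta> + \<gamma>) * C * W (r + 1) Y" .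
  qed
  then show ?thesis unfolding adm_def by blast
qed

lemma Gen_pairing_adm: "classB f \<Longrightarrow> adm (\<lambda>Y. Gen Y (\<lambda>Z. pairing Z f))"
proof -
  assume f: "classB f"
  obtain C r where "bnd (\<lambda>Y. pairing Y f) C r" using pairing_adm[OF f] unfolding adm_def by blast
  then have "adm (\<lambda>Y. q Y * pairing Y f)" by (rule adm_q)
  from adm_lin[OF this pairing_adm[OF classB_L[OF f]], of 1 1]
  show ?thesis by (simp add: Gen_pairing)
qed

end

lemma cont_on_from_bounded:
  fixes f :: "real \<Rightarrow> real"
  assumes "\<And>T. T \<ge> 0 \<Longrightarrow> continuous_on {0..T} f"
  shows "continuous_on {0..} f"
  unfolding continuous_on_eq_continuous_within
proof
  fix x :: real assume x: "x \<in> {0..}"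
  have "continuous_on {0..x+1} f" using assms x by auto
  then have "continuous (at x within {0..x+1}) f" using x by (simp add: continuous_on_eq_continuous_within)
  moreover have "at x within {0..x+1} = at x within {0..}"
    by (rule at_within_nhd[of _ "ball x 1"]) (auto simp: dist_real_def)
  ultimately show "continuous (at x within {0..}) f" by simp
qed

lemma exp_le_abs: "0 \<le> (s::real) \<Longrightarrow> s \<le> t \<Longrightarrow> exp (c * s) \<le> exp (\<bar>c\<bar> * t)"
proof -
  assume s: "0 \<le> s" "s \<le> t"
  have "c * s \<le> \<bar>c\<bar> * s" using s by (intro mult_right_mono) (auto simp: abs_ge_self)
  also have "\<dots> \<le> \<bar>c\<bar> * t" using s by (intro mult_left_mono) auto
  finally show ?thesis by simp
qed

context gfi begin

lemma fwd_sum_deriv: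
  assumes s: "s \<ge> 0"
  shows "((\<lambda>s. \<Sum>k<Suc K. P k s X (\<lambda>Y. pairing Y f)) has_real_derivative
    (\<Sum>k<Suc K. P k s X (\<lambda>Y. pairing Y (gfi_L \<beta> \<theta> \<gamma> f))) - P K s X (\<lambda>Y. Gen Y (\<lambda>Z. pairing Z f)))
    (at s within {0..})"
proof -
  let ?g = "\<lambda>Y. pairing Y f" and ?Gh = "\<lambda>Y. Gen Y (\<lambda>Z. pairing Z f)"
  have d: "((\<lambda>s. \<Sum>k<Suc K. P k s X ?g) has_real_derivative
     (\<Sum>k<Suc K. P k s X (\<lambda>Y. - q Y * ?g Y) + (if k = 0 then 0 else P (k - 1) s X ?Gh))) (at s within {0..})"
    by (intro DERIV_sum P_fwd s)
  have e1: "(\<Sum>k<Suc K. (if k = 0 then 0 else P (k - 1) s X ?Gh)) = (\<Sum>k<K. P k s X ?Gh)"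
    by (subst sum.lessThan_Suc_shift) simp
  have e2: "(\<Sum>k<Suc K. P k s X (\<lambda>Y. - q Y * ?g Y)) + (\<Sum>k<K. P k s X ?Gh)
      = (\<Sum>k<Suc K. P k s X (\<lambda>Y. pairing Y (gfi_L \<beta> \<theta> \<gamma> f))) - P K s X ?Gh"
  proof -
    have Lk: "P k s X (\<lambda>Y. pairing Y (gfi_L \<beta> \<theta> \<gamma> f)) = P k s X (\<lambda>Y. - q Y * ?g Y) + P k s X ?Gh" for k
      unfolding P_add[symmetric] by (rule P_cong) (simp add: Gen_pairing)
    have "(\<Sum>k<Suc K. P k s X (\<lambda>Y. pairing Y (gfi_L \<beta> \<theta> \<gamma> f)))
        = (\<Sum>k<Suc K. P k s X (\<lambda>Y. - q Y * ?g Y)) + (\<Sum>k<Suc K. P k s X ?Gh)"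
      unfolding Lk by (rule sum.distrib)
    moreover have "(\<Sum>k<Suc K. P k s X ?Gh) = (\<Sum>k<K. P k s X ?Gh) + P K s X ?Gh" by simp
    ultimately show ?thesis by linarith
  qed
  show ?thesis using d unfolding sum.distrib e1 e2 .
qed

lemma int_identity:
  assumes f: "classB f" and X: "zf X" and t: "t \<ge> 0"
  shows "((\<lambda>s. M s X (\<lambda>Y. pairing Y (gfi_L \<beta> \<theta> \<gamma> f))) has_integral
     (M t X (\<lambda>Y. pairing Y f) - pairing X f)) {0..t}"
proof -
  let ?g = "\<lambda>Y. pairing Y f" and ?g2 = "\<lambda>Y. pairing Y (gfi_L \<beta> \<theta> \<gamma> f)" and ?Gh = "\<lambda>Y. Gen Y (\<lambda>Z. pairing Z f)"
  define F where "F K s = (\<Sum>k<Suc K. P k s X ?g2) - P K s X ?Gh" for K s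
  have a2: "adm ?g2" using pairing_adm[OF classB_L[OF f]] .
  have ah: "adm ?Gh" using Gen_pairing_adm[OF f] .
  have ag: "adm ?g" using pairing_adm[OF f] .
  obtain C2 r2 where b2: "bnd ?g2 C2 r2" using a2 unfolding adm_def by blast
  obtain C3 r3 where b3: "bnd ?Gh C3 r3" using ah unfolding adm_def by blast
  have FI: "(F K has_integral ((\<Sum>k<Suc K. P k t X ?g) - pairing X f)) {0..t}" for K
  proof -
    have "(F K has_integral ((\<Sum>k<Suc K. P k t X ?g) - (\<Sum>k<Suc K. P k 0 X ?g))) {0..t}"
      unfolding F_def
    proof (rule fundamental_theorem_of_calculus[OF t])
      fix x assume x: "x \<in> {0..t}"
      have "((\<lambda>s. \<Sum>k<Suc K. P k s X ?g) has_real_derivative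
          (\<Sum>k<Suc K. P k x X ?g2) - P K x X ?Gh) (at x within {0..t})"
        by (rule has_field_derivative_subset[OF fwd_sum_deriv]) (use x in auto)
      then show "((\<lambda>s. \<Sum>k<Suc K. P k s X ?g) has_vector_derivative
          (\<Sum>k<Suc K. P k x X ?g2) - P K x X ?Gh) (at x within {0..t})"
        by (simp add: has_real_derivative_iff_has_vector_derivative)
    qed
    then show ?thesis unfolding U_zero_time by simp
  qed
  define h where "h s = C2 * exp (\<bar>cW r2\<bar> * t) * W r2 X + C3 * exp (\<bar>cW r3\<bar> * t) * W r3 X" for s :: real
  have hint: "h integrable_on {0..t}" unfolding h_def by (rule integrable_const_ivl)
  have dom: "\<forall>s\<in>{0..t}. norm (F K s) \<le> h s" for K
  proof
    fix s assume s: "s \<in> {0..t}"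
    then have s0: "s \<ge> 0" by auto
    have r2: "r2 \<ge> 1" "C2 \<ge> 0" and r3: "r3 \<ge> 1" "C3 \<ge> 0" using b2 b3 unfolding bnd_def by auto
    have "\<bar>\<Sum>k<Suc K. P k s X ?g2\<bar> \<le> (\<Sum>k<Suc K. C2 * P k s X (W r2))"
      by (rule order.trans[OF sum_abs]) (intro sum_mono P_bnd[OF X s0 b2])
    also have "\<dots> = C2 * (\<Sum>k<Suc K. P k s X (W r2))" by (rule sum_distrib_left[symmetric])
    also have "\<dots> \<le> C2 * (exp (cW r2 * s) * W r2 X)"
      by (rule mult_left_mono[OF W_bound[OF r2(1) s0 X, of "Suc K", folded cW_def] r2(2)])
    also have "\<dots> \<le> C2 * exp (\<bar>cW r2\<bar> * t) * W r2 X"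
    proof -
      have "exp (cW r2 * s) * W r2 X \<le> exp (\<bar>cW r2\<bar> * t) * W r2 X"
        using s W_nonneg[of r2 X] exp_le_abs[of s t "cW r2"] by (intro mult_right_mono) auto
      then show ?thesis using r2 by (simp add: mult_left_mono mult.assoc)
    qed
    finally have A: "\<bar>\<Sum>k<Suc K. P k s X ?g2\<bar> \<le> C2 * exp (\<bar>cW r2\<bar> * t) * W r2 X" .
    have "\<bar>P K s X ?Gh\<bar> \<le> C3 * P K s X (W r3)" by (rule P_bnd[OF X s0 b3])
    also have "P K s X (W r3) \<le> (\<Sum>k<Suc K. P k s X (W r3))"
      using s0 W_nonneg by (intro member_le_sum P_nonneg) auto
    also have "\<dots> \<le> exp (cW r3 * s) * W r3 X" using W_bound[OF r3(1) s0 X] unfolding cW_def .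
    also have "\<dots> \<le> exp (\<bar>cW r3\<bar> * t) * W r3 X"
      using s W_nonneg[of r3 X] exp_le_abs[of s t "cW r3"] by (intro mult_right_mono) auto
    finally have B: "\<bar>P K s X ?Gh\<bar> \<le> C3 * exp (\<bar>cW r3\<bar> * t) * W r3 X"
      using r3 by (simp add: mult_left_mono mult.assoc)
    show "norm (F K s) \<le> h s" unfolding F_def h_def using A B by simp
  qed
  have lim: "\<forall>s\<in>{0..t}. (\<lambda>K. F K s) \<longlonglongrightarrow> M s X ?g2" 
  proof
    fix s assume s: "s \<in> {0..t}"
    then have s0: "s \<ge> 0" by auto
    have "(\<lambda>K. \<Sum>k<Suc K. P k s X ?g2) \<longlonglongrightarrow> M s X ?g2"
      unfolding M_def using summable_LIMSEQ[OF adm_summable[OF a2 X s0]] by (rule LIMSEQ_Suc)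
    moreover have "(\<lambda>K. P K s X ?Gh) \<longlonglongrightarrow> 0" using summable_LIMSEQ_zero[OF adm_summable[OF ah X s0]] .
    ultimately show "(\<lambda>K. F K s) \<longlonglongrightarrow> M s X ?g2" unfolding F_def using tendsto_diff by fastforce
  qed
  have ylim: "(\<lambda>K. (\<Sum>k<Suc K. P k t X ?g) - pairing X f) \<longlonglongrightarrow> M t X ?g - pairing X f"
  proof -
    have "(\<lambda>K. \<Sum>k<Suc K. P k t X ?g) \<longlonglongrightarrow> M t X ?g"
      unfolding M_def using summable_LIMSEQ[OF adm_summable[OF ag X t]] by (rule LIMSEQ_Suc)
    from tendsto_diff[OF this tendsto_const] show ?thesis .
  qed
  show ?thesis by (rule has_integral_dominated_convergence[OF FI hint dom lim ylim])
qed

lemma M_cont: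
  assumes f: "classB f" and X: "zf X"
  shows "continuous_on {0..} (\<lambda>s. M s X (\<lambda>Y. pairing Y f))"
proof (rule cont_on_from_bounded)
  fix T :: real assume T: "T \<ge> 0"
  let ?m2 = "\<lambda>s. M s X (\<lambda>Y. pairing Y (gfi_L \<beta> \<theta> \<gamma> f))"
  have int: "?m2 integrable_on {0..T}" using int_identity[OF f X T] by blast
  have eq: "M s X (\<lambda>Y. pairing Y f) = pairing X f + integral {0..s} ?m2" if "s \<in> {0..T}" for s
    using int_identity[OF f X, of s] that by (auto dest: integral_unique)
  have "continuous_on {0..T} (\<lambda>s. pairing X f + integral {0..s} ?m2)"
    by (intro continuous_intros indefinite_integral_continuous_1 int)
  then show "continuous_on {0..T} (\<lambda>s. M s X (\<lambda>Y. pairing Y f))"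
    by (rule continuous_on_eq) (simp add: eq)
qed

lemma M_deriv:
  assumes f: "classB f" and X: "zf X" and t: "t \<ge> 0"
  shows "((\<lambda>s. M s X (\<lambda>Y. pairing Y f)) has_real_derivative M t X (\<lambda>Y. pairing Y (gfi_L \<beta> \<theta> \<gamma> f))) (at t within {0..})"
proof -
  let ?m2 = "\<lambda>s. M s X (\<lambda>Y. pairing Y (gfi_L \<beta> \<theta> \<gamma> f))"
  have c2: "continuous_on {0..} ?m2" by (rule M_cont[OF classB_L[OF f] X])
  have d: "((\<lambda>s. pairing X f + integral {0..s} ?m2) has_real_derivative ?m2 t) (at t within {0..})"
    using int_deriv[OF c2 t] by (auto intro!: derivative_eq_intros)
  have eq: "pairing X f + integral {0..s} ?m2 = M s X (\<lambda>Y. pairing Y f)" if "s \<in> {0..}" for s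
    using int_identity[OF f X, of s] that by (auto dest: integral_unique)
  show ?thesis
    by (rule has_field_derivative_transform_within[OF d, of 1]) (use t eq in auto)
qed

end

lemma classB_lin:
  assumes "classB f" "classB g" shows "classB (\<lambda>m. a * f m + b * g m)"
proof -
  obtain p1 C1 where p1: "p1 > 0" "\<forall>n\<ge>1. \<bar>f n\<bar> \<le> C1 * real n powr p1" using assms(1) unfolding classB_def by blast
  obtain p2 C2 where p2: "p2 > 0" "\<forall>n\<ge>1. \<bar>g n\<bar> \<le> C2 * real n powr p2" using assms(2) unfolding classB_def by blast
  have C1: "C1 \<ge> 0" using p1(2)[rule_format, of 1] by simp
  have C2: "C2 \<ge> 0" using p2(2)[rule_format, of 1] by simp
  let ?p = "max p1 p2"
  have "\<bar>a * f n + b * g n\<bar> \<le> (\<bar>a\<bar> * C1 + \<bar>b\<bar> * C2) * real n powr ?p" if n: "n \<ge> 1" for n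
  proof -
    have e1: "real n powr p1 \<le> real n powr ?p" "real n powr p2 \<le> real n powr ?p" using n by (auto intro!: powr_mono)
    have "\<bar>a * f n + b * g n\<bar> \<le> \<bar>a\<bar> * \<bar>f n\<bar> + \<bar>b\<bar> * \<bar>g n\<bar>" by (simp add: abs_mult abs_triangle_ineq[THEN order.trans])
    also have "\<dots> \<le> \<bar>a\<bar> * (C1 * real n powr ?p) + \<bar>b\<bar> * (C2 * real n powr ?p)"
      using p1(2) p2(2) n e1 C1 C2
      by (intro add_mono mult_left_mono) (auto intro: order.trans mult_left_mono)
    finally show ?thesis by (simp add: algebra_simps)
  qed
  then show ?thesis unfolding classB_def using p1 p2 by (intro exI[of _ ?p]) auto
qed

lemma classB_dom: "classB f \<Longrightarrow> (\<And>m. \<bar>g m\<bar> \<le> \<bar>f m\<bar>) \<Longrightarrow> classB g"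
  unfolding classB_def by (meson order.trans)

lemma classB_pos: "classB f \<Longrightarrow> classB (pos_part f)"
  by (erule classB_dom) (simp add: pos_part_def)

lemma classB_neg: "classB f \<Longrightarrow> classB (neg_part f)"
  by (erule classB_dom) (simp add: neg_part_def)

lemma pos_nonneg: "0 \<le> pos_part f m" and neg_nonneg: "0 \<le> neg_part f m"
  unfolding pos_part_def neg_part_def by auto

lemma pos_neg: "pos_part f m - neg_part f m = f m"
  unfolding pos_part_def neg_part_def by auto

context gfi begin

lemma zf_single: "n \<ge> 1 \<Longrightarrow> zf {#n#}"
  unfolding zf_def by auto

lemma M_nonneg: "adm g \<Longrightarrow> zf X \<Longrightarrow> t \<ge> 0 \<Longrightarrow> (\<And>Y. zf Y \<Longrightarrow> 0 \<le> g Y) \<Longrightarrow> 0 \<le> M t X g"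
  unfolding M_def using zf_reach by (intro suminf_nonneg adm_summable P_nonneg) auto

lemma pairing_nonneg_zf: "zf Y \<Longrightarrow> (\<And>m. m \<ge> 1 \<Longrightarrow> 0 \<le> f m) \<Longrightarrow> 0 \<le> pairing Y f"
  unfolding zf_def by (intro pairing_nonneg) (metis less_one not_less)

lemma Mplus_real:
  assumes f: "classB f" "\<And>m. 0 \<le> f m" and t: "t \<ge> 0" and n: "n \<ge> 1"
  shows "gfi_Mplus \<beta> \<theta> \<gamma> f t n = ennreal (M t {#n#} (\<lambda>Y. pairing Y f))"
  unfolding Mplus_eq[OF f(2) t] M_def
  by (rule suminf_ennreal2) (use f t zf_single[OF n] in \<open>auto intro!: P_nonneg pairing_nonneg adm_summable pairing_adm\<close>)

lemma M_cong: "zf X \<Longrightarrow> (\<And>Y. zf Y \<Longrightarrow> g Y = h Y) \<Longrightarrow> M t X g = M t X h"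
  unfolding M_def using zf_reach by (intro suminf_cong P_cong) blast

lemma gfi_M_eq:
  assumes f: "classB f" and t: "t \<ge> 0" and n: "n \<ge> 1"
  shows "gfi_M \<beta> \<theta> \<gamma> f t n = M t {#n#} (\<lambda>Y. pairing Y f)"
proof -
  have X: "zf {#n#}" by (rule zf_single[OF n])
  have p: "0 \<le> M t {#n#} (\<lambda>Y. pairing Y (pos_part f))"
    using classB_pos[OF f] X t pos_nonneg by (intro M_nonneg pairing_adm pairing_nonneg) auto
  have q: "0 \<le> M t {#n#} (\<lambda>Y. pairing Y (neg_part f))"
    using classB_neg[OF f] X t neg_nonneg by (intro M_nonneg pairing_adm pairing_nonneg) auto
  have "gfi_M \<beta> \<theta> \<gamma> f t n = M t {#n#} (\<lambda>Y. pairing Y (pos_part f)) - M t {#n#} (\<lambda>Y. pairing Y (neg_part f))"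
    unfolding gfi_M_def
    using Mplus_real[OF classB_pos[OF f] pos_nonneg t n] Mplus_real[OF classB_neg[OF f] neg_nonneg t n] p q
    by simp
  also have "\<dots> = M t {#n#} (\<lambda>Y. 1 * pairing Y (pos_part f) + (-1) * pairing Y (neg_part f))"
    using M_lin[OF pairing_adm[OF classB_pos[OF f]] pairing_adm[OF classB_neg[OF f]] X t, of 1 "-1"] by simp
  also have "\<dots> = M t {#n#} (\<lambda>Y. pairing Y f)"
    using pairing_lin[of _ 1 "pos_part f" "-1" "neg_part f"] pos_neg[of f] by simp
  finally show ?thesis .
qed

end

context gfi begin

lemma part1:
  assumes r: "r \<ge> 1" and t: "t \<ge> 0" and n: "n \<ge> 1"
  shows "gfi_Mplus \<beta> \<theta> \<gamma> (\<lambda>m. real m powr r) t n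
          \<le> ennreal (exp ((2 powr (r - 1) * r * \<beta> - \<theta>) * t) * real n powr r)"
proof -
  let ?B = "exp ((2 powr (r - 1) * r * \<beta> - \<theta>) * t) * Vp r {#n#}"
  have X: "zf {#n#}" by (rule zf_single[OF n])
  have a0: "0 \<le> P j t {#n#} (Vp r)" for j using t Vp_nonneg by (intro P_nonneg) auto
  have ps: "(\<Sum>j<K. P j t {#n#} (Vp r)) \<le> ?B" for K by (rule Vp_bound[OF r t X])
  have sm: "summable (\<lambda>j. P j t {#n#} (Vp r))"
  proof (rule bounded_imp_summable[OF a0])
    fix m show "sum (\<lambda>j. P j t {#n#} (Vp r)) {..m} \<le> ?B" using ps[of "Suc m"] unfolding lessThan_Suc_atMost .
  qed
  have "gfi_Mplus \<beta> \<theta> \<gamma> (\<lambda>m. real m powr r) t n = (\<Sum>j. ennreal (P j t {#n#} (Vp r)))"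
  proof -
    have nn: "\<And>m. 0 \<le> real m powr r" by simp
    show ?thesis unfolding Mplus_eq[OF nn t] Vp_def ..
  qed
  also have "\<dots> = ennreal (\<Sum>j. P j t {#n#} (Vp r))" by (rule suminf_ennreal2[OF a0 sm])
  also have "\<dots> \<le> ennreal ?B" by (intro ennreal_leI suminf_le_const[OF sm ps])
  finally show ?thesis by (simp add: Vp_def pairing_single)
qed

lemma part2:
  assumes f: "classB f" and t: "t \<ge> 0" and n: "n \<ge> 1"
  shows "gfi_Mplus \<beta> \<theta> \<gamma> (pos_part f) t n < \<infinity> \<and> gfi_Mplus \<beta> \<theta> \<gamma> (neg_part f) t n < \<infinity>"
  using Mplus_real[OF classB_pos[OF f] pos_nonneg t n] Mplus_real[OF classB_neg[OF f] neg_nonneg t n]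
  by simp

lemma part3:
  assumes f: "classB f" and n: "n \<ge> 1"
  shows "gfi_M \<beta> \<theta> \<gamma> f 0 n = f n"
proof -
  have "(\<lambda>k. P k 0 {#n#} (\<lambda>Y. pairing Y f)) = (\<lambda>k. if k = 0 then pairing {#n#} f else 0)"
    by (rule ext) (simp add: P_zero_time)
  then have "M 0 {#n#} (\<lambda>Y. pairing Y f) = pairing {#n#} f"
    unfolding M_def by (simp add: sums_single[THEN sums_unique[symmetric]])
  then show ?thesis using gfi_M_eq[OF f _ n, of 0] by (simp add: pairing_single)
qed

lemma W_single: "W r {#n#} = real n powr r"
  unfolding W_def V1_def by (simp add: pairing_single)

lemma part4:
  assumes f: "classB f" and t: "t \<ge> 0"
  shows "classB (gfi_M \<beta> \<theta> \<gamma> f t)"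
proof -
  obtain C r where r: "r \<ge> 1" "0 \<le> C" "\<forall>n\<ge>1. \<bar>f n\<bar> \<le> C * real n powr r" using classB_bnd[OF f] by blast
  have b: "bnd (\<lambda>Y. pairing Y f) C r" by (rule pairing_bnd[OF r])
  have "\<bar>gfi_M \<beta> \<theta> \<gamma> f t n\<bar> \<le> (C * exp (cW r * t)) * real n powr r" if n: "n \<ge> 1" for n
    unfolding gfi_M_eq[OF f t n] using M_bnd[OF zf_single[OF n] t b] by (simp add: W_single)
  then show ?thesis unfolding classB_def using r by (intro exI[of _ r] exI[of _ "C * exp (cW r * t)"]) auto
qed

lemma part5:
  assumes f: "classB f" and g: "classB g" and t: "t \<ge> 0" and n: "n \<ge> 1"
  shows "gfi_M \<beta> \<theta> \<gamma> (\<lambda>m. a * f m + b * g m) t n = a * gfi_M \<beta> \<theta> \<gamma> f t n + b * gfi_M \<beta> \<theta> \<gamma> g t n"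
  unfolding gfi_M_eq[OF classB_lin[OF f g] t n] gfi_M_eq[OF f t n] gfi_M_eq[OF g t n] pairing_lin
  by (rule M_lin[OF pairing_adm[OF f] pairing_adm[OF g] zf_single[OF n] t])

lemma part6:
  assumes f: "classB f" and t: "t \<ge> 0" and f0: "\<forall>n\<ge>1. f n \<ge> 0" and n: "n \<ge> 1"
  shows "gfi_M \<beta> \<theta> \<gamma> f t n \<ge> 0"
  unfolding gfi_M_eq[OF f t n] using f0
  by (intro M_nonneg pairing_adm f zf_single n t pairing_nonneg_zf) auto

lemma semigroup_pos:
  assumes h: "classB h" "\<And>m. 0 \<le> h m" and s: "s \<ge> 0" and t: "t \<ge> 0" and X: "zf X"
  shows "M (s + t) X (\<lambda>Y. pairing Y h) = M s X (\<lambda>Z. pairing Z (\<lambda>z. M t {#z#} (\<lambda>Y. pairing Y h)))"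
proof -
  have "M (s + t) X (\<lambda>Y. pairing Y h) = M s X (\<lambda>Z. M t Z (\<lambda>Y. pairing Y h))"
    using h by (intro M_semigroup_nonneg pairing_adm X s t pairing_nonneg) auto
  also have "\<dots> = M s X (\<lambda>Z. pairing Z (\<lambda>z. M t {#z#} (\<lambda>Y. pairing Y h)))"
    by (intro M_cong X M_pairing h(1) t)
  finally show ?thesis .
qed

lemma part7:
  assumes f: "classB f" and s: "s \<ge> 0" and t: "t \<ge> 0" and n: "n \<ge> 1"
  shows "gfi_M \<beta> \<theta> \<gamma> f (s + t) n = gfi_M \<beta> \<theta> \<gamma> (gfi_M \<beta> \<theta> \<gamma> f t) s n"
proof -
  let ?fp = "pos_part f" and ?fn = "neg_part f"
  have X: "zf {#n#}" by (rule zf_single[OF n])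
  define mp where "mp z = M t {#z#} (\<lambda>Y. pairing Y ?fp)" for z
  define mn where "mn z = M t {#z#} (\<lambda>Y. pairing Y ?fn)" for z
  have fp: "classB ?fp" and fn: "classB ?fn" using classB_pos[OF f] classB_neg[OF f] .
  have mp_eq: "mp z = gfi_M \<beta> \<theta> \<gamma> ?fp t z" if "z \<ge> 1" for z
    unfolding mp_def using gfi_M_eq[OF fp t that] by simp
  have mn_eq: "mn z = gfi_M \<beta> \<theta> \<gamma> ?fn t z" if "z \<ge> 1" for z
    unfolding mn_def using gfi_M_eq[OF fn t that] by simp
  have cmp: "classB mp" using part4[OF fp t] unfolding classB_def by (metis mp_eq)
  have cmn: "classB mn" using part4[OF fn t] unfolding classB_def by (metis mn_eq)
  have Mft: "gfi_M \<beta> \<theta> \<gamma> f t z = mp z - mn z" if "z \<ge> 1" for z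
  proof -
    have "gfi_M \<beta> \<theta> \<gamma> f t z = M t {#z#} (\<lambda>Y. 1 * pairing Y ?fp + (-1) * pairing Y ?fn)"
      unfolding gfi_M_eq[OF f t that]
      using pairing_lin[of _ 1 ?fp "-1" ?fn] pos_neg[of f] by simp
    also have "\<dots> = mp z - mn z"
      unfolding mp_def mn_def using M_lin[OF pairing_adm[OF fp] pairing_adm[OF fn] zf_single[OF that] t, of 1 "-1"] by simp
    finally show ?thesis .
  qed
  have "gfi_M \<beta> \<theta> \<gamma> (gfi_M \<beta> \<theta> \<gamma> f t) s n = M s {#n#} (\<lambda>Z. pairing Z (gfi_M \<beta> \<theta> \<gamma> f t))"
    by (rule gfi_M_eq[OF part4[OF f t] s n])
  also have "\<dots> = M s {#n#} (\<lambda>Z. 1 * pairing Z mp + (-1) * pairing Z mn)"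
  proof (rule M_cong[OF X])
    fix Z assume Z: "zf Z"
    have "pairing Z (gfi_M \<beta> \<theta> \<gamma> f t) = pairing Z (\<lambda>z. 1 * mp z + (-1) * mn z)"
    proof (rule pairing_cong)
      fix m assume "m \<in># Z"
      then have "m \<ge> 1" using Z unfolding zf_def by (cases m) auto
      then show "gfi_M \<beta> \<theta> \<gamma> f t m = 1 * mp m + (-1) * mn m" using Mft by simp
    qed
    then show "pairing Z (gfi_M \<beta> \<theta> \<gamma> f t) = 1 * pairing Z mp + (-1) * pairing Z mn"
      by (simp only: pairing_lin)
  qed
  also have "\<dots> = M s {#n#} (\<lambda>Z. pairing Z mp) - M s {#n#} (\<lambda>Z. pairing Z mn)"
    using M_lin[OF pairing_adm[OF cmp] pairing_adm[OF cmn] X s, of 1 "-1"] by simp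
  also have "\<dots> = M (s + t) {#n#} (\<lambda>Y. pairing Y ?fp) - M (s + t) {#n#} (\<lambda>Y. pairing Y ?fn)"
    unfolding mp_def mn_def
    using semigroup_pos[OF fp pos_nonneg s t X] semigroup_pos[OF fn neg_nonneg s t X] by simp
  also have "\<dots> = M (s + t) {#n#} (\<lambda>Y. 1 * pairing Y ?fp + (-1) * pairing Y ?fn)"
    using M_lin[OF pairing_adm[OF fp] pairing_adm[OF fn] X, of "s + t" 1 "-1"] s t by simp
  also have "\<dots> = M (s + t) {#n#} (\<lambda>Y. pairing Y f)"
    using pairing_lin[of _ 1 ?fp "-1" ?fn] pos_neg[of f] by simp
  also have "\<dots> = gfi_M \<beta> \<theta> \<gamma> f (s + t) n" using gfi_M_eq[OF f _ n, of "s + t"] s t by simp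
  finally show ?thesis by simp
qed

lemma part9:
  assumes f: "classB f" and t: "t \<ge> 0" and n: "n \<ge> 1"
  shows "((\<lambda>\<tau>. gfi_M \<beta> \<theta> \<gamma> f \<tau> n) has_real_derivative gfi_M \<beta> \<theta> \<gamma> (gfi_L \<beta> \<theta> \<gamma> f) t n)
          (at t within {0..})"
proof -
  have d: "((\<lambda>s. M s {#n#} (\<lambda>Y. pairing Y f)) has_real_derivative gfi_M \<beta> \<theta> \<gamma> (gfi_L \<beta> \<theta> \<gamma> f) t n) (at t within {0..})"
    unfolding gfi_M_eq[OF classB_L[OF f] t n] by (rule M_deriv[OF f zf_single[OF n] t])
  show ?thesis
    by (rule has_field_derivative_transform_within[OF d, of 1]) (use t gfi_M_eq[OF f _ n] in auto)
qed

end

theorem lemma4p1: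
  fixes \<beta> \<theta> \<gamma> :: real
  assumes "\<beta> > 0" and "\<theta> > 0" and "\<gamma> > 0"
  shows
    "(\<forall>p::real. p \<ge> 1 \<longrightarrow> (\<forall>t\<ge>0. \<forall>n::nat\<ge>1.
        gfi_Mplus \<beta> \<theta> \<gamma> (\<lambda>m. real m powr p) t n
          \<le> ennreal (exp ((2 powr (p - 1) * p * \<beta> - \<theta>) * t) * real n powr p)))
   \<and> (\<forall>f. classB f \<longrightarrow> (\<forall>t\<ge>0. \<forall>n::nat\<ge>1.
        gfi_Mplus \<beta> \<theta> \<gamma> (pos_part f) t n < \<infinity> \<and> gfi_Mplus \<beta> \<theta> \<gamma> (neg_part f) t n < \<infinity>))
   \<and> (\<forall>f. classB f \<longrightarrow> (\<forall>n::nat\<ge>1. gfi_M \<beta> \<theta> \<gamma> f 0 n = f n))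
   \<and> (\<forall>t\<ge>0. \<forall>f. classB f \<longrightarrow> classB (gfi_M \<beta> \<theta> \<gamma> f t))
   \<and> (\<forall>t\<ge>0. \<forall>f g. \<forall>a b::real. classB f \<longrightarrow> classB g \<longrightarrow> (\<forall>n::nat\<ge>1.
        gfi_M \<beta> \<theta> \<gamma> (\<lambda>m. a * f m + b * g m) t n
          = a * gfi_M \<beta> \<theta> \<gamma> f t n + b * gfi_M \<beta> \<theta> \<gamma> g t n))
   \<and> (\<forall>t\<ge>0. \<forall>f. classB f \<longrightarrow> (\<forall>n::nat\<ge>1. f n \<ge> 0) \<longrightarrow>
        (\<forall>n::nat\<ge>1. gfi_M \<beta> \<theta> \<gamma> f t n \<ge> 0))
   \<and> (\<forall>s\<ge>0. \<forall>t\<ge>0. \<forall>f. classB f \<longrightarrow> (\<forall>n::nat\<ge>1.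
        gfi_M \<beta> \<theta> \<gamma> f (s + t) n = gfi_M \<beta> \<theta> \<gamma> (gfi_M \<beta> \<theta> \<gamma> f t) s n))
   \<and> (\<forall>f. classB f \<longrightarrow> classB (gfi_L \<beta> \<theta> \<gamma> f))
   \<and> (\<forall>f. classB f \<longrightarrow> (\<forall>t\<ge>0. \<forall>n::nat\<ge>1.
        ((\<lambda>\<tau>. gfi_M \<beta> \<theta> \<gamma> f \<tau> n) has_real_derivative gfi_M \<beta> \<theta> \<gamma> (gfi_L \<beta> \<theta> \<gamma> f) t n)
          (at t within {0..})))"
proof -
  interpret gfi \<beta> \<theta> \<gamma> using assms by unfold_locales
  have c1: "\<forall>p::real. p \<ge> 1 \<longrightarrow> (\<forall>t\<ge>0. \<forall>n::nat\<ge>1.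
        gfi_Mplus \<beta> \<theta> \<gamma> (\<lambda>m. real m powr p) t n
          \<le> ennreal (exp ((2 powr (p - 1) * p * \<beta> - \<theta>) * t) * real n powr p))"
    using part1 by blast
  have c2: "\<forall>f. classB f \<longrightarrow> (\<forall>t\<ge>0. \<forall>n::nat\<ge>1.
        gfi_Mplus \<beta> \<theta> \<gamma> (pos_part f) t n < \<infinity> \<and> gfi_Mplus \<beta> \<theta> \<gamma> (neg_part f) t n < \<infinity>)"
    using part2 by blast
  have c3: "\<forall>f. classB f \<longrightarrow> (\<forall>n::nat\<ge>1. gfi_M \<beta> \<theta> \<gamma> f 0 n = f n)"
    using part3 by blast
  have c4: "\<forall>t\<ge>0. \<forall>f. classB f \<longrightarrow> classB (gfi_M \<beta> \<theta> \<gamma> f t)"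
    using part4 by blast
  have c5: "\<forall>t\<ge>0. \<forall>f g. \<forall>a b::real. classB f \<longrightarrow> classB g \<longrightarrow> (\<forall>n::nat\<ge>1.
        gfi_M \<beta> \<theta> \<gamma> (\<lambda>m. a * f m + b * g m) t n
          = a * gfi_M \<beta> \<theta> \<gamma> f t n + b * gfi_M \<beta> \<theta> \<gamma> g t n)"
    using part5 by blast
  have c6: "\<forall>t\<ge>0. \<forall>f. classB f \<longrightarrow> (\<forall>n::nat\<ge>1. f n \<ge> 0) \<longrightarrow>
        (\<forall>n::nat\<ge>1. gfi_M \<beta> \<theta> \<gamma> f t n \<ge> 0)"
    using part6 by blast
  have c7: "\<forall>s\<ge>0. \<forall>t\<ge>0. \<forall>f. classB f \<longrightarrow> (\<forall>n::nat\<ge>1.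
        gfi_M \<beta> \<theta> \<gamma> f (s + t) n = gfi_M \<beta> \<theta> \<gamma> (gfi_M \<beta> \<theta> \<gamma> f t) s n)"
    using part7 by blast
  have c8: "\<forall>f. classB f \<longrightarrow> classB (gfi_L \<beta> \<theta> \<gamma> f)"
    using classB_L by blast
  have c9: "\<forall>f. classB f \<longrightarrow> (\<forall>t\<ge>0. \<forall>n::nat\<ge>1.
        ((\<lambda>\<tau>. gfi_M \<beta> \<theta> \<gamma> f \<tau> n) has_real_derivative gfi_M \<beta> \<theta> \<gamma> (gfi_L \<beta> \<theta> \<gamma> f) t n)
          (at t within {0..}))"
    using part9 by blast
  show ?thesis using c1 c2 c3 c4 c5 c6 c7 c8 c9 by blast
qed

end
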